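(* Consider the homogeneous all-to-all network described in the context with coupling $\varepsilon$, $(N-1)\varepsilon<1$, a neuronal partial reset $R$, and let $2\le a_1\le N$. Consider the conditions, for $a\in\{1,\dots,a_1-1\}$, (A) $U^{-1}\big(R((a_1-1)\varepsilon)\big)-U^{-1}\big(R((a_1-1)\varepsilon-a\varepsilon)\big)\le U^{-1}\big(1-(N-a_1)\varepsilon\big)-U^{-1}\big(1-(N-a_1)\varepsilon-a\varepsilon\big)$, (B) $U^{-1}\big(R((a_1-1)\varepsilon)+(N-a_1)\varepsilon\big)-U^{-1}\big(R((a_1-1)\varepsilon-a\varepsilon)+(N-a_1)\varepsilon\big)\le1-U^{-1}(1-a\varepsilon)$. If $U$ is icpd, then (A) for all $a\in\{1,\dots,a_1-1\}$ is sufficient, and (B) for all $a\in\{1,\dots,a_1-1\}$ is necessary, for an avalanche of size $a_1$ to be invariant under return. If $U$ is dcpd, then (B) for all such $a$ is sufficient and (A) for all such $a$ is necessary.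
   Context: Model: $N$ units, phases $\phi_i$, rise function $U$ (smooth, $U'>0$, $U(0)=0$, $U(1)=1$), partial reset $R$ (monotonically increasing, $R(0)=0$; neuronal if $0\le R(\zeta)\le\zeta$ for $\zeta\ge0$). $H_\varepsilon(\phi)=U^{-1}(U(\phi)+\varepsilon)$, $J_\varepsilon(\phi)=U^{-1}(R(U(\phi)+\varepsilon-1))$, $S_\sigma(\phi)=\phi+\sigma$, $\bigodot_{r=p}^q(S_{\sigma_r}\circ H_{\varepsilon_r}):=S_{\sigma_q}\circ H_{\varepsilon_q}\circ\cdots\circ S_{\sigma_p}\circ H_{\varepsilon_p}$. Homogeneous all-to-all coupling: pulse strength $\varepsilon>0$ from every unit to every other unit, no self-coupling. Dynamics: between events phases increase at unit rate; when units reach phase $1$ an avalanche occurs: potentials $u_i=U(\phi_i)$ of all units are raised by $\varepsilon$ per firing unit other than themselves, any unit whose potential thereby reaches $\ge1$ also fires, iterating until no new unit crosses; a unit that does not fire has new phase $H_{k\varepsilon}(\phi_i)$, a firing unit has new phase $J_{k'\varepsilon}(\phi_i)$, where $k$ (resp. $k'$) is the number of firing units (other than itself). Firing sequence: for a state in which an avalanche of $a_1$ units is triggered by the unit(s) at phase $1$, list the avalanches until the trigger unit fires next as $\mathcal{F}=((a_1,\sigma_1),\dots,(a_m,\sigma_m))$, $a_r$ = size of the $r$-th avalanche, $\sigma_r\ge0$ the time between the $r$-th and next avalanche. $\mathcal{F}$ is admissible if it is realized by some state, and trigger invariant if the triggering unit(s) of the first avalanche are again at phase $1$ at the end. For a unit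 in the first avalanche with phase $\phi$ just before it, its phase at the end is $M_{\mathcal{F}}(\phi)=\big[\bigodot_{r=2}^m(S_{\sigma_r}\circ H_{a_r\varepsilon})\big]\circ S_{\sigma_1}\circ J_{(a_1-1)\varepsilon}(\phi)$. An avalanche of size $a_1$ is invariant under return if $M_{\mathcal{F}}(U^{-1}(1-a\varepsilon))\ge U^{-1}(1-a\varepsilon)$ for all $a\in\{1,\dots,a_1-1\}$ and all admissible trigger-invariant $\mathcal{F}$ with first avalanche size $a_1$. icpd/dcpd: with $\Delta H(\phi,\Delta\phi,\varepsilon)=H_\varepsilon(\phi+\Delta\phi)-H_\varepsilon(\phi)$ on $\mathcal{D}=\{0\le\varepsilon\le1,0\le\phi\le1,0\le\Delta\phi\le U^{-1}(1-\varepsilon)-\phi\}$, $U$ is icpd if $\partial_\phi\Delta H\ge0$ on $\mathcal{D}$ and dcpd if $\partial_\phi\Delta H\le0$ on $\mathcal{D}$. *)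

theory Defs
  imports "HOL-Analysis.Analysis"
begin

text \<open>Units are indexed by 0..N-1; a state is a phase vector phi :: nat => real
  (only the entries below N matter).  U is the rise function, U^{-1} its inverse on [0,1].\<close>

definition Uinv :: "(real \<Rightarrow> real) \<Rightarrow> real \<Rightarrow> real" where
  "Uinv U y = the_inv_into {0..1} U y"

definition Hmap :: "(real \<Rightarrow> real) \<Rightarrow> real \<Rightarrow> real \<Rightarrow> real" where
  "Hmap U e phi = Uinv U (U phi + e)"

definition Jmap :: "(real \<Rightarrow> real) \<Rightarrow> (real \<Rightarrow> real) \<Rightarrow> real \<Rightarrow> real \<Rightarrow> real" where
  "Jmap U R e phi = Uinv U (R (U phi + e - 1))"

definition Smap :: "real \<Rightarrow> real \<Rightarrow> real" where
  "Smap s phi = phi + s"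

definition rise_function :: "(real \<Rightarrow> real) \<Rightarrow> bool" where
  "rise_function U \<longleftrightarrow>
     (\<forall>k. \<forall>x\<in>{0..1}. ((deriv ^^ k) U has_real_derivative (deriv ^^ Suc k) U x) (at x))
   \<and> (\<forall>x\<in>{0..1}. deriv U x > 0) \<and> U 0 = 0 \<and> U 1 = 1"

definition neuronal_reset :: "(real \<Rightarrow> real) \<Rightarrow> bool" where
  "neuronal_reset R \<longleftrightarrow> mono_on {0..} R \<and> R 0 = 0 \<and> (\<forall>z\<ge>0. 0 \<le> R z \<and> R z \<le> z)"

definition DeltaH :: "(real \<Rightarrow> real) \<Rightarrow> real \<Rightarrow> real \<Rightarrow> real \<Rightarrow> real" where
  "DeltaH U phi dphi e = Hmap U e (phi + dphi) - Hmap U e phi"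

definition cpdDom :: "(real \<Rightarrow> real) \<Rightarrow> (real \<times> real \<times> real) set" where
  "cpdDom U = {(e, phi, dphi). 0 \<le> e \<and> e \<le> 1 \<and> 0 \<le> phi \<and> phi \<le> 1 \<and>
                 0 \<le> dphi \<and> dphi \<le> Uinv U (1 - e) - phi}"

text \<open>Partial derivative in phi on the closed domain D: derivative of the phi-section,
  taken within the section (unique wherever the section accumulates at phi).\<close>
definition icpd :: "(real \<Rightarrow> real) \<Rightarrow> bool" where
  "icpd U \<longleftrightarrow> (\<forall>e phi dphi d. (e, phi, dphi) \<in> cpdDom U \<longrightarrow>
      \<not> trivial_limit (at phi within {x. (e, x, dphi) \<in> cpdDom U}) \<longrightarrow>
      ((\<lambda>x. DeltaH U x dphi e) has_real_derivative d) (at phi within {x. (e, x, dphi) \<in> cpdDom U}) \<longrightarrow>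
      d \<ge> 0)"

definition dcpd :: "(real \<Rightarrow> real) \<Rightarrow> bool" where
  "dcpd U \<longleftrightarrow> (\<forall>e phi dphi d. (e, phi, dphi) \<in> cpdDom U \<longrightarrow>
      \<not> trivial_limit (at phi within {x. (e, x, dphi) \<in> cpdDom U}) \<longrightarrow>
      ((\<lambda>x. DeltaH U x dphi e) has_real_derivative d) (at phi within {x. (e, x, dphi) \<in> cpdDom U}) \<longrightarrow>
      d \<le> 0)"

definition valid_state :: "nat \<Rightarrow> (nat \<Rightarrow> real) \<Rightarrow> bool" where
  "valid_state N phi \<longleftrightarrow> (\<forall>i<N. 0 \<le> phi i \<and> phi i \<le> 1) \<and> (\<exists>i<N. phi i = 1)"

definition trig :: "nat \<Rightarrow> (nat \<Rightarrow> real) \<Rightarrow> nat set" where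
  "trig N phi = {i. i < N \<and> phi i = 1}"

text \<open>A set S of firing units is closed if no further unit is pushed to potential >= 1
  (a non-firing unit receives eps per firing unit).\<close>
definition aval_closed :: "(real \<Rightarrow> real) \<Rightarrow> real \<Rightarrow> nat \<Rightarrow> (nat \<Rightarrow> real) \<Rightarrow> nat set \<Rightarrow> bool" where
  "aval_closed U eps N phi S \<longleftrightarrow> S \<subseteq> {..<N} \<and>
     (\<forall>i<N. i \<notin> S \<longrightarrow> U (phi i) + eps * real (card S) < 1)"

text \<open>The avalanche: the least closed set containing the triggering units
  (= result of iterating the firing process until no new unit crosses).\<close>
definition aval :: "(real \<Rightarrow> real) \<Rightarrow> real \<Rightarrow> nat \<Rightarrow> (nat \<Rightarrow> real) \<Rightarrow> nat set" where
  "aval U eps N phi = \<Inter>{S. trig N phi \<subseteq> S \<and> aval_closed U eps N phi S}"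

definition post :: "(real \<Rightarrow> real) \<Rightarrow> (real \<Rightarrow> real) \<Rightarrow> real \<Rightarrow> nat \<Rightarrow> (nat \<Rightarrow> real) \<Rightarrow> nat \<Rightarrow> real" where
  "post U R eps N phi i =
     (let A = aval U eps N phi in
      if i \<in> A then Jmap U R (eps * (real (card A) - 1)) (phi i)
      else Hmap U (eps * real (card A)) (phi i))"

text \<open>Time until the next avalanche (the largest phase reaches 1).\<close>
definition gap :: "(real \<Rightarrow> real) \<Rightarrow> (real \<Rightarrow> real) \<Rightarrow> real \<Rightarrow> nat \<Rightarrow> (nat \<Rightarrow> real) \<Rightarrow> real" where
  "gap U R eps N phi = 1 - Max (post U R eps N phi ` {..<N})"

definition next_state :: "(real \<Rightarrow> real) \<Rightarrow> (real \<Rightarrow> real) \<Rightarrow> real \<Rightarrow> nat \<Rightarrow> (nat \<Rightarrow> real) \<Rightarrow> nat \<Rightarrow> real" where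
  "next_state U R eps N phi = (\<lambda>i. post U R eps N phi i + gap U R eps N phi)"

text \<open>traj r = state just before the (r+1)-th avalanche.\<close>
definition traj :: "(real \<Rightarrow> real) \<Rightarrow> (real \<Rightarrow> real) \<Rightarrow> real \<Rightarrow> nat \<Rightarrow> (nat \<Rightarrow> real) \<Rightarrow> nat \<Rightarrow> nat \<Rightarrow> real" where
  "traj U R eps N phi r = (next_state U R eps N ^^ r) phi"

text \<open>The state phi realizes the firing sequence F = ((a_1,s_1),...,(a_m,s_m)):
  avalanches 1..m with sizes a_r and subsequent inter-event times s_r, where the
  triggering units do not fire in avalanches 2..m but fire in avalanche m+1.\<close>
definition realizes :: "(real \<Rightarrow> real) \<Rightarrow> (real \<Rightarrow> real) \<Rightarrow> real \<Rightarrow> nat \<Rightarrow> (nat \<Rightarrow> real) \<Rightarrow> (nat \<times> real) list \<Rightarrow> bool" where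
  "realizes U R eps N phi F \<longleftrightarrow> valid_state N phi \<and> F \<noteq> [] \<and>
     (\<forall>r < length F. F ! r = (card (aval U eps N (traj U R eps N phi r)), gap U R eps N (traj U R eps N phi r))) \<and>
     (\<forall>r \<in> {1..<length F}. aval U eps N (traj U R eps N phi r) \<inter> trig N phi = {}) \<and>
     aval U eps N (traj U R eps N phi (length F)) \<inter> trig N phi \<noteq> {}"

definition admissible :: "(real \<Rightarrow> real) \<Rightarrow> (real \<Rightarrow> real) \<Rightarrow> real \<Rightarrow> nat \<Rightarrow> (nat \<times> real) list \<Rightarrow> bool" where
  "admissible U R eps N F \<longleftrightarrow> (\<exists>phi. realizes U R eps N phi F)"

definition trigger_invariant :: "(real \<Rightarrow> real) \<Rightarrow> (real \<Rightarrow> real) \<Rightarrow> real \<Rightarrow> nat \<Rightarrow> (nat \<times> real) list \<Rightarrow> bool" where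
  "trigger_invariant U R eps N F \<longleftrightarrow> (\<exists>phi. realizes U R eps N phi F \<and>
      (\<forall>i \<in> trig N phi. traj U R eps N phi (length F) i = 1))"

text \<open>M_F(phi) = [odot_{r=2}^m (S_{s_r} o H_{a_r eps})] o S_{s_1} o J_{(a_1-1) eps} (phi).\<close>
definition Mmap :: "(real \<Rightarrow> real) \<Rightarrow> (real \<Rightarrow> real) \<Rightarrow> real \<Rightarrow> (nat \<times> real) list \<Rightarrow> real \<Rightarrow> real" where
  "Mmap U R eps F phi =
     foldl (\<lambda>x (a, s). Smap s (Hmap U (eps * real a) x))
       (Smap (snd (hd F)) (Jmap U R (eps * (real (fst (hd F)) - 1)) phi)) (tl F)"

definition invariant_under_return :: "(real \<Rightarrow> real) \<Rightarrow> (real \<Rightarrow> real) \<Rightarrow> real \<Rightarrow> nat \<Rightarrow> nat \<Rightarrow> bool" where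
  "invariant_under_return U R eps N a1 \<longleftrightarrow>
     (\<forall>a \<in> {1..<a1}. \<forall>F. admissible U R eps N F \<and> trigger_invariant U R eps N F \<and> fst (hd F) = a1 \<longrightarrow>
        Mmap U R eps F (Uinv U (1 - real a * eps)) \<ge> Uinv U (1 - real a * eps))"

definition condA :: "(real \<Rightarrow> real) \<Rightarrow> (real \<Rightarrow> real) \<Rightarrow> real \<Rightarrow> nat \<Rightarrow> nat \<Rightarrow> nat \<Rightarrow> bool" where
  "condA U R eps N a1 a \<longleftrightarrow>
     Uinv U (R ((real a1 - 1) * eps)) - Uinv U (R ((real a1 - 1) * eps - real a * eps))
     \<le> Uinv U (1 - (real N - real a1) * eps) - Uinv U (1 - (real N - real a1) * eps - real a * eps)"

definition condB :: "(real \<Rightarrow> real) \<Rightarrow> (real \<Rightarrow> real) \<Rightarrow> real \<Rightarrow> nat \<Rightarrow> nat \<Rightarrow> nat \<Rightarrow> bool" where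
  "condB U R eps N a1 a \<longleftrightarrow>
     Uinv U (R ((real a1 - 1) * eps) + (real N - real a1) * eps)
       - Uinv U (R ((real a1 - 1) * eps - real a * eps) + (real N - real a1) * eps)
     \<le> 1 - Uinv U (1 - real a * eps)"

end

theory Submission
  imports Defs
begin


context
  fixes U :: "real \<Rightarrow> real"
  assumes rf: "rise_function U"
begin

lemma U_deriv: "x \<in> {0..1} \<Longrightarrow> (U has_real_derivative deriv U x) (at x)"
  using rf unfolding rise_function_def
  by (metis (no_types, lifting) funpow_0 funpow_Suc_right id_apply o_apply)

lemma U_deriv_pos: "x \<in> {0..1} \<Longrightarrow> deriv U x > 0"
  using rf unfolding rise_function_def by blast

lemma U0: "U 0 = 0" and U1: "U 1 = 1"
  using rf unfolding rise_function_def by auto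

lemma U_cont: "continuous_on {0..1} U"
  by (meson DERIV_continuous U_deriv continuous_at_imp_continuous_on)

lemma U_isCont: "x \<in> {0..1} \<Longrightarrow> isCont U x"
  using DERIV_isCont U_deriv by blast

lemma U_less: "0 \<le> x \<Longrightarrow> x < y \<Longrightarrow> y \<le> 1 \<Longrightarrow> U x < U y"
  apply (rule DERIV_pos_imp_increasing[of x y U], simp)
  using U_deriv U_deriv_pos by (metis atLeastAtMost_iff order_trans)

lemma U_le: "0 \<le> x \<Longrightarrow> x \<le> y \<Longrightarrow> y \<le> 1 \<Longrightarrow> U x \<le> U y"
  using U_less by (cases "x = y") (auto intro: less_imp_le)

lemma U_le_iff: "x \<in> {0..1} \<Longrightarrow> y \<in> {0..1} \<Longrightarrow> U x \<le> U y \<longleftrightarrow> x \<le> y"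
  using U_less U_le by (meson atLeastAtMost_iff not_le)

lemma U_less_iff: "x \<in> {0..1} \<Longrightarrow> y \<in> {0..1} \<Longrightarrow> U x < U y \<longleftrightarrow> x < y"
  using U_le_iff by (meson not_le)

lemma U_range: "x \<in> {0..1} \<Longrightarrow> U x \<in> {0..1}"
  using U_le[of 0 x] U_le[of x 1] U0 U1 by auto

lemma U_inj: "inj_on U {0..1}"
  by (metis U_le_iff inj_onI order_antisym order_refl)

lemma U_image: "U ` {0..1} = {0..1}"
proof
  show "U ` {0..1} \<subseteq> {0..1}" using U_range by auto
  show "{0..1} \<subseteq> U ` {0..1}"
  proof
    fix y :: real assume y: "y \<in> {0..1}"
    have "\<exists>x\<ge>0. x \<le> 1 \<and> U x = y"
      apply (rule IVT') using y U0 U1 U_cont by auto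
    then show "y \<in> U ` {0..1}" by auto
  qed
qed

lemma Uinv_range: "y \<in> {0..1} \<Longrightarrow> Uinv U y \<in> {0..1}"
  unfolding Uinv_def using U_image U_inj by (metis the_inv_into_into order_refl)

lemma U_Uinv: "y \<in> {0..1} \<Longrightarrow> U (Uinv U y) = y"
  unfolding Uinv_def using U_image U_inj by (metis f_the_inv_into_f)

lemma Uinv_U: "x \<in> {0..1} \<Longrightarrow> Uinv U (U x) = x"
  unfolding Uinv_def using U_inj by (metis the_inv_into_f_f)

lemma Uinv_le_iff: "x \<in> {0..1} \<Longrightarrow> y \<in> {0..1} \<Longrightarrow> Uinv U x \<le> Uinv U y \<longleftrightarrow> x \<le> y"
  by (metis U_Uinv U_le_iff Uinv_range)

lemma Uinv_less_iff: "x \<in> {0..1} \<Longrightarrow> y \<in> {0..1} \<Longrightarrow> Uinv U x < Uinv U y \<longleftrightarrow> x < y"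
  by (metis U_Uinv U_less_iff Uinv_range)

lemma Uinv0: "Uinv U 0 = 0" and Uinv1: "Uinv U 1 = 1"
  using Uinv_U U0 U1 by (metis atLeastAtMost_iff order_refl zero_le_one)+

lemma Uinv_cont: "continuous_on {0..1} (Uinv U)"
  using continuous_on_inv[OF U_cont compact_Icc] Uinv_U U_image by (metis)

lemma Uinv_deriv:
  assumes "0 < y" "y < 1"
  shows "(Uinv U has_real_derivative inverse (deriv U (Uinv U y))) (at y)"
proof (rule DERIV_inverse_function[where f=U and a=0 and b=1])
  have "Uinv U y \<in> {0..1}" using assms Uinv_range by auto
  then show "(U has_real_derivative deriv U (Uinv U y)) (at (Uinv U y))" "deriv U (Uinv U y) \<noteq> 0"
    using U_deriv U_deriv_pos by (auto simp: less_imp_neq[symmetric])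
  show "0 < y" "y < 1" by fact+
  show "\<And>z. 0 < z \<Longrightarrow> z < 1 \<Longrightarrow> U (Uinv U z) = z" using U_Uinv by auto
  show "isCont (Uinv U) y"
    using continuous_on_interior[OF Uinv_cont] assms by auto
qed

end


context
  fixes U :: "real \<Rightarrow> real"
  assumes rf: "rise_function U"
begin

lemmas UL = U_deriv[OF rf] U_deriv_pos[OF rf] U0[OF rf] U1[OF rf] U_cont[OF rf] U_le[OF rf] U_less[OF rf]
  U_le_iff[OF rf] U_less_iff[OF rf] U_range[OF rf] Uinv_range[OF rf] U_Uinv[OF rf] Uinv_U[OF rf]
  Uinv_le_iff[OF rf] Uinv_less_iff[OF rf] Uinv0[OF rf] Uinv1[OF rf] Uinv_cont[OF rf] Uinv_deriv[OF rf]

lemma H_range: "p \<in> {0..1} \<Longrightarrow> U p + e \<in> {0..1} \<Longrightarrow> Hmap U e p \<in> {0..1}"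
  unfolding Hmap_def by (rule Uinv_range[OF rf])

lemma U_H: "U p + e \<in> {0..1} \<Longrightarrow> U (Hmap U e p) = U p + e"
  unfolding Hmap_def by (rule U_Uinv[OF rf])

lemma H_le: "p \<in> {0..1} \<Longrightarrow> q \<in> {0..1} \<Longrightarrow> p \<le> q \<Longrightarrow> U p + e \<in> {0..1} \<Longrightarrow> U q + e \<in> {0..1}
   \<Longrightarrow> Hmap U e p \<le> Hmap U e q"
  unfolding Hmap_def using Uinv_le_iff[OF rf, of "U p + e" "U q + e"] U_le[OF rf, of p q] by simp

lemma H_less: "p \<in> {0..1} \<Longrightarrow> q \<in> {0..1} \<Longrightarrow> p < q \<Longrightarrow> U p + e \<in> {0..1} \<Longrightarrow> U q + e \<in> {0..1}
   \<Longrightarrow> Hmap U e p < Hmap U e q"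
  unfolding Hmap_def using Uinv_less_iff[OF rf, of "U p + e" "U q + e"] U_less[OF rf, of p q] by simp

lemma H_zero: "p \<in> {0..1} \<Longrightarrow> Hmap U 0 p = p"
  unfolding Hmap_def using Uinv_U[OF rf] by simp

lemma H_comp: "U p + b \<in> {0..1} \<Longrightarrow> Hmap U a (Hmap U b p) = Hmap U (a + b) p"
  unfolding Hmap_def using U_Uinv[OF rf, of "U p + b"] by (simp add: add.commute add.left_commute)

lemma H_Uinv: "y \<in> {0..1} \<Longrightarrow> Hmap U e (Uinv U y) = Uinv U (y + e)"
  unfolding Hmap_def using U_Uinv[OF rf] by simp

lemma DeltaH_deriv:
  assumes "0 < x" "0 \<le> d" "0 \<le> e" "U (x + d) + e < 1" "x + d \<le> 1"
  shows "\<exists>D. ((\<lambda>z. DeltaH U z d e) has_real_derivative D) (at x)"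
proof -
  have x01: "x \<in> {0..1}" "x + d \<in> {0..1}" using assms by auto
  have Ux: "U x > 0" using UL(7)[of 0 x] assms UL(3) by auto
  have Uxd: "U x \<le> U (x+d)" using UL(6)[of x "x+d"] assms by auto
  have sh: "((\<lambda>z. z + d) has_real_derivative 1) (at x)" by (auto intro!: derivative_eq_intros)
  have d1: "((\<lambda>z. U (z + d) + e) has_real_derivative deriv U (x + d) * 1) (at x)"
    using DERIV_add[OF DERIV_chain2[OF UL(1)[OF x01(2)] sh] DERIV_const[of e]] by simp
  have d2: "((\<lambda>z. U z + e) has_real_derivative deriv U x) (at x)"
    using DERIV_add[OF UL(1)[OF x01(1)] DERIV_const[of e]] by simp
  have i1: "(Uinv U has_real_derivative inverse (deriv U (Uinv U (U (x+d) + e)))) (at (U (x+d) + e))"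
    apply (rule UL(19)) using Ux Uxd assms by auto
  have i2: "(Uinv U has_real_derivative inverse (deriv U (Uinv U (U x + e)))) (at (U x + e))"
    apply (rule UL(19)) using Ux Uxd assms by auto
  have "((\<lambda>z. Uinv U (U (z + d) + e) - Uinv U (U z + e)) has_real_derivative
      inverse (deriv U (Uinv U (U (x+d) + e))) * (deriv U (x + d) * 1) -
      inverse (deriv U (Uinv U (U x + e))) * deriv U x) (at x)"
    by (rule DERIV_diff[OF DERIV_chain2[OF i1 d1] DERIV_chain2[OF i2 d2]])
  then show ?thesis unfolding DeltaH_def Hmap_def by blast
qed

lemma DeltaH_cont:
  assumes "0 \<le> p" "0 \<le> d" "0 \<le> e" "e \<le> 1" "q + d \<le> Uinv U (1 - e)"
  shows "continuous_on {p..q} (\<lambda>z. DeltaH U z d e)"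
proof -
  have T: "Uinv U (1 - e) \<in> {0..1}" using Uinv_range[OF rf, of "1-e"] assms by auto
  have UT: "U (Uinv U (1 - e)) = 1 - e" using U_Uinv[OF rf, of "1-e"] assms by auto
  have rng: "z \<in> {0..1} \<and> z + d \<in> {0..1} \<and> U z + e \<in> {0..1} \<and> U (z + d) + e \<in> {0..1}" if "z \<in> {p..q}" for z
  proof -
    have a: "z \<in> {0..1}" "z + d \<in> {0..1}" using that assms T by auto
    have "U (z + d) \<le> 1 - e" using UL(6)[of "z+d" "Uinv U (1-e)"] UT a T assms that by auto
    moreover have "U z \<le> U (z + d)" using UL(6)[of z "z+d"] a assms by auto
    ultimately show ?thesis using a UL(10)[of z] UL(10)[of "z+d"] assms by auto
  qed
  have cU: "continuous_on {p..q} (\<lambda>z. U (f z) + e)" if "continuous_on {p..q} f" "\<And>z. z \<in> {p..q} \<Longrightarrow> f z \<in> {0..1}" for f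
    apply (rule continuous_intros)+
    apply (rule continuous_on_compose2[OF UL(5) that(1)]) using that by auto
  have c1: "continuous_on {p..q} (\<lambda>z. Uinv U (U (z + d) + e))"
    apply (rule continuous_on_compose2[OF UL(18) cU[of "\<lambda>z. z + d"]])
    using rng by (auto intro!: continuous_intros)
  have c2: "continuous_on {p..q} (\<lambda>z. Uinv U (U z + e))"
    apply (rule continuous_on_compose2[OF UL(18) cU[of "\<lambda>z. z"]])
    using rng by (auto intro!: continuous_intros)
  show ?thesis unfolding DeltaH_def Hmap_def using continuous_on_diff[OF c1 c2] by simp
qed

lemma section_interior:
  assumes "0 \<le> e" "e \<le> 1" "0 \<le> d" "0 < x" "x + d < Uinv U (1 - e)"
  shows "\<not> trivial_limit (at x within {z. (e, z, d) \<in> cpdDom U})"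
proof -
  have T: "Uinv U (1 - e) \<le> 1" using Uinv_range[OF rf, of "1-e"] assms by auto
  have sub: "{0<..<Uinv U (1 - e) - d} \<subseteq> {z. (e, z, d) \<in> cpdDom U}"
  proof
    fix z assume z: "z \<in> {0<..<Uinv U (1 - e) - d}"
    then have "0 < z" "z < Uinv U (1 - e) - d" by auto
    then show "z \<in> {z. (e, z, d) \<in> cpdDom U}" unfolding cpdDom_def using assms(1-3) T
      by (simp add: case_prod_beta)
  qed
  have "x \<in> interior {z. (e, z, d) \<in> cpdDom U}"
    by (rule interiorI[OF _ _ sub]) (use assms in auto)
  then have "at x within {z. (e, z, d) \<in> cpdDom U} = at x" by (rule at_within_interior)
  then show ?thesis using trivial_limit_at[of x] by simp
qed

lemma cpd_mono_gen:
  assumes sgn: "\<And>x D. (e, x, d) \<in> cpdDom U \<Longrightarrow> \<not> trivial_limit (at x within {z. (e, z, d) \<in> cpdDom U}) \<Longrightarrow>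
      ((\<lambda>z. DeltaH U z d e) has_real_derivative D) (at x within {z. (e, z, d) \<in> cpdDom U}) \<Longrightarrow> 0 \<le> c * D"
    and c: "c = 1 \<or> c = -1"
    and a: "0 \<le> e" "e \<le> 1" "0 \<le> d" "0 \<le> p" "p \<le> q" "q + d \<le> Uinv U (1 - e)"
  shows "0 \<le> c * (DeltaH U q d e - DeltaH U p d e)"
proof -
  have T: "Uinv U (1 - e) \<in> {0..1}" using Uinv_range[OF rf, of "1-e"] a by auto
  have UT: "U (Uinv U (1 - e)) = 1 - e" using U_Uinv[OF rf, of "1-e"] a by auto
  have dv: "\<exists>D. ((\<lambda>z. c * DeltaH U z d e) has_real_derivative D) (at x) \<and> D \<ge> 0" if x: "p < x" "x < q" for x
  proof -
    have xd: "x + d < Uinv U (1 - e)" using x a by auto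
    have "U (x + d) < 1 - e" using UL(7)[of "x+d" "Uinv U (1-e)"] UT xd x a T by auto
    then obtain D where D: "((\<lambda>z. DeltaH U z d e) has_real_derivative D) (at x)"
      using DeltaH_deriv[of x d e] x a xd T by force
    have "(e, x, d) \<in> cpdDom U" unfolding cpdDom_def using x a xd T by auto
    then have "0 \<le> c * D" using sgn[of x D] section_interior[of e d x] a x xd D
      by (auto intro: has_field_derivative_at_within)
    then show ?thesis using DERIV_cmult[OF D, of c] by blast
  qed
  have "c * DeltaH U p d e \<le> c * DeltaH U q d e"
    apply (rule DERIV_nonneg_imp_increasing_open[OF a(5)])
    using dv apply blast
    using DeltaH_cont[of p d e q] a by (intro continuous_on_mult continuous_on_const) auto
  then show ?thesis by (simp add: right_diff_distrib)
qed

lemma icpd_mono: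
  assumes "icpd U" "0 \<le> e" "e \<le> 1" "0 \<le> d" "0 \<le> p" "p \<le> q" "q + d \<le> Uinv U (1 - e)"
  shows "DeltaH U p d e \<le> DeltaH U q d e"
proof -
  have "0 \<le> 1 * (DeltaH U q d e - DeltaH U p d e)"
  proof (rule cpd_mono_gen[of e d 1 p q])
    fix x D assume "(e, x, d) \<in> cpdDom U" "\<not> trivial_limit (at x within {z. (e, z, d) \<in> cpdDom U})"
      "((\<lambda>z. DeltaH U z d e) has_real_derivative D) (at x within {z. (e, z, d) \<in> cpdDom U})"
    then show "0 \<le> 1 * D" using assms(1) unfolding icpd_def by simp
  qed (use assms in auto)
  then show ?thesis by simp
qed

lemma dcpd_mono:
  assumes "dcpd U" "0 \<le> e" "e \<le> 1" "0 \<le> d" "0 \<le> p" "p \<le> q" "q + d \<le> Uinv U (1 - e)"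
  shows "DeltaH U q d e \<le> DeltaH U p d e"
proof -
  have "0 \<le> -1 * (DeltaH U q d e - DeltaH U p d e)"
  proof (rule cpd_mono_gen[of e d "-1" p q])
    fix x D assume "(e, x, d) \<in> cpdDom U" "\<not> trivial_limit (at x within {z. (e, z, d) \<in> cpdDom U})"
      "((\<lambda>z. DeltaH U z d e) has_real_derivative D) (at x within {z. (e, z, d) \<in> cpdDom U})"
    then show "0 \<le> -1 * D" using assms(1) unfolding dcpd_def by simp
  qed (use assms in auto)
  then show ?thesis by simp
qed

end


context
  fixes U :: "real \<Rightarrow> real"
  assumes rf: "rise_function U"
begin

context
  fixes x y k s :: "nat \<Rightarrow> real" and m :: nat
  assumes m1: "1 \<le> m"
    and x01: "\<And>r. 1 \<le> r \<Longrightarrow> r \<le> m \<Longrightarrow> x r \<in> {0..1}"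
    and xstep: "\<And>r. 1 \<le> r \<Longrightarrow> r < m \<Longrightarrow> x (Suc r) = Hmap U (k r) (x r) + s r"
    and ystep: "\<And>r. 1 \<le> r \<Longrightarrow> r < m \<Longrightarrow> y (Suc r) = Hmap U (k r) (y r) + s r"
    and kpos: "\<And>r. 1 \<le> r \<Longrightarrow> r < m \<Longrightarrow> 0 \<le> k r"
    and spos: "\<And>r. 1 \<le> r \<Longrightarrow> r < m \<Longrightarrow> 0 \<le> s r"
    and xtrig: "\<And>r. 1 \<le> r \<Longrightarrow> r < m \<Longrightarrow> U (x r) + k r < 1"
    and xm: "x m = 1"
    and y1: "0 \<le> y 1" "y 1 \<le> x 1"
begin

lemma chain_y: "1 \<le> r \<Longrightarrow> r \<le> m \<Longrightarrow> 0 \<le> y r \<and> y r \<le> x r"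
proof (induction r rule: dec_induct)
  case base then show ?case using y1 by auto
next
  case (step n)
  have xn: "x n \<in> {0..1}" using x01 step by auto
  have yn: "y n \<in> {0..1}" using step xn by auto
  have Uy: "U (y n) \<le> U (x n)" using U_le[OF rf, of "y n" "x n"] step xn by auto
  have Uy0: "0 \<le> U (y n)" using U_range[OF rf yn] by auto
  have Ux0: "0 \<le> U (x n)" using U_range[OF rf xn] by auto
  have r1: "U (y n) + k n \<in> {0..1}" "U (x n) + k n \<in> {0..1}"
    using xtrig[of n] kpos[of n] step Uy Uy0 Ux0 by auto
  have "0 \<le> Hmap U (k n) (y n)" using H_range[OF rf yn r1(1)] by auto
  moreover have "Hmap U (k n) (y n) \<le> Hmap U (k n) (x n)"
    using H_le[OF rf yn xn _ r1] step by auto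
  ultimately show ?case using xstep[of n] ystep[of n] spos[of n] step by auto
qed

definition "KK r = (\<Sum>j\<in>{r..<m}. k j)"

lemma KK_split: "r < m \<Longrightarrow> KK r = k r + KK (Suc r)"
  unfolding KK_def by (simp add: sum.atLeast_Suc_lessThan)

lemma KK_m: "KK m = 0" unfolding KK_def by simp

lemma KK_nonneg: "1 \<le> r \<Longrightarrow> 0 \<le> KK r"
  unfolding KK_def by (rule sum_nonneg) (use kpos in auto)

lemma chain_x: "r \<le> m \<Longrightarrow> 1 \<le> r \<Longrightarrow> U (x r) + KK r \<le> 1"
proof (induction r rule: inc_induct)
  case base then show ?case using xm KK_m U1[OF rf] by simp
next
  case (step n)
  have n1: "1 \<le> n" using step by auto
  have xn: "x n \<in> {0..1}" using x01 step by auto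
  have xn1: "x (Suc n) \<in> {0..1}" using x01 step by auto
  have Ux0: "0 \<le> U (x n)" using U_range[OF rf xn] by auto
  have r1: "U (x n) + k n \<in> {0..1}" using xtrig[of n] kpos[of n] step Ux0 by auto
  have "Hmap U (k n) (x n) \<le> x (Suc n)" using xstep[of n] spos[of n] step by auto
  then have "U (Hmap U (k n) (x n)) \<le> U (x (Suc n))"
    using U_le[OF rf, of "Hmap U (k n) (x n)" "x (Suc n)"] H_range[OF rf xn r1] xn1 by auto
  then have "U (x n) + k n \<le> U (x (Suc n))" using U_H[OF rf r1] by simp
  then show ?case using step.IH step.hyps n1 KK_split[of n] by simp
qed

lemma KK_le1: "1 \<le> r \<Longrightarrow> r \<le> m \<Longrightarrow> KK r \<le> 1"
  using chain_x[of r] U_range[OF rf x01[of r]] by auto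

lemma x_le_T: "1 \<le> r \<Longrightarrow> r \<le> m \<Longrightarrow> x r \<le> Uinv U (1 - KK r)"
proof -
  assume a: "1 \<le> r" "r \<le> m"
  have xr: "x r \<in> {0..1}" using x01 a by auto
  have "U (x r) \<le> 1 - KK r" using chain_x[OF a(2) a(1)] by linarith
  moreover have "1 - KK r \<in> {0..1}" using KK_nonneg a KK_le1 by auto
  ultimately show ?thesis using Uinv_le_iff[OF rf U_range[OF rf xr]] Uinv_U[OF rf xr] by metis
qed

lemma chain_icpd:
  assumes ic: "icpd U"
  shows "r \<le> m \<Longrightarrow> 1 \<le> r \<Longrightarrow> Hmap U (KK r) (Uinv U (1 - KK r) - (x r - y r)) \<le> y m"
proof (induction r rule: inc_induct)
  case base
  have "y m \<in> {0..1}" using chain_y[of m] x01[of m] m1 by auto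
  then show ?case using xm KK_m Uinv1[OF rf] H_zero[OF rf] by simp
next
  case (step n)
  have n1: "1 \<le> n" "n < m" using step by auto
  define a where "a = KK (Suc n)"
  define kk where "kk = k n"
  have Kn: "KK n = kk + a" using KK_split[OF n1(2)] a_def kk_def by simp
  define d where "d = x n - y n"
  define Tn where "Tn = Uinv U (1 - KK n)"
  define T1 where "T1 = Uinv U (1 - a)"
  have xn: "x n \<in> {0..1}" using x01 n1 by auto
  have yn: "y n \<in> {0..1}" "y n \<le> x n" using chain_y[of n] n1 xn by auto
  have a0: "0 \<le> a" "a \<le> 1" using KK_nonneg KK_le1 n1 a_def by auto
  have k0: "0 \<le> kk" using kpos n1 kk_def by auto
  have Kn1: "KK n \<le> 1" using KK_le1 n1 by auto
  have d0: "0 \<le> d" using yn d_def by auto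
  have TnR: "1 - KK n \<in> {0..1}" using Kn Kn1 a0 k0 by auto
  have Tn01: "Tn \<in> {0..1}" using Uinv_range[OF rf TnR] Tn_def by simp
  have UTn: "U Tn = 1 - KK n" using U_Uinv[OF rf TnR] Tn_def by simp
  have xT: "x n \<le> Tn" using x_le_T n1 Tn_def by auto
  have HT: "Hmap U kk Tn = T1" unfolding Tn_def T1_def using H_Uinv[OF rf TnR] Kn
    by (simp add: algebra_simps)
  have Ux0: "0 \<le> U (x n)" using U_range[OF rf xn] by auto
  have Uy: "U (y n) \<le> U (x n)" using U_le[OF rf, of "y n" "x n"] yn xn by auto
  have Uy0: "0 \<le> U (y n)" using U_range[OF rf] yn by auto
  have r1: "U (y n) + kk \<in> {0..1}" "U (x n) + kk \<in> {0..1}"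
    using xtrig[of n] k0 n1 Uy Uy0 Ux0 kk_def by auto
  have Tnd: "Tn - d \<in> {0..1}" using xT yn d_def Tn01 by auto
  have UTnd: "U (Tn - d) \<le> U Tn" using U_le[OF rf, of "Tn - d" Tn] Tnd Tn01 d0 by auto
  have UTnd0: "0 \<le> U (Tn - d)" using U_range[OF rf Tnd] by auto
  have r2: "U (Tn - d) + kk \<in> {0..1}" "U Tn + kk \<in> {0..1}" using UTnd UTnd0 UTn Kn a0 k0 by auto
  have TnU: "Tn \<le> Uinv U (1 - kk)"
    using Uinv_le_iff[OF rf TnR, of "1 - kk"] Kn Kn1 a0 k0 Tn_def by auto
  have mono: "DeltaH U (y n) d kk \<le> DeltaH U (Tn - d) d kk"
    apply (rule icpd_mono[OF rf ic])
    using k0 Kn Kn1 a0 d0 yn xT TnU d_def by auto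
  then have "Hmap U kk (x n) - Hmap U kk (y n) \<le> T1 - Hmap U kk (Tn - d)"
    unfolding DeltaH_def using HT d_def by simp
  moreover have xs: "x (Suc n) - y (Suc n) = Hmap U kk (x n) - Hmap U kk (y n)"
    using xstep[of n] ystep[of n] n1 kk_def by simp
  ultimately have le1: "Hmap U kk (Tn - d) \<le> T1 - (x (Suc n) - y (Suc n))" by simp
  have H1: "Hmap U kk (Tn - d) \<in> {0..1}" using H_range[OF rf Tnd r2(1)] .
  have T1R: "1 - a \<in> {0..1}" using a0 by auto
  have T101: "T1 \<in> {0..1}" using Uinv_range[OF rf T1R] T1_def by simp
  have UT1: "U T1 = 1 - a" using U_Uinv[OF rf T1R] T1_def by simp
  have z01: "T1 - (x (Suc n) - y (Suc n)) \<in> {0..1}"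
    using le1 H1 xs T101 H_le[OF rf yn(1) xn yn(2) r1] by auto
  have "U (T1 - (x (Suc n) - y (Suc n))) \<le> U T1"
    using U_le[OF rf, of "T1 - (x (Suc n) - y (Suc n))" T1] z01 T101 xs H_le[OF rf yn(1) xn yn(2) r1] by auto
  then have r3: "U (T1 - (x (Suc n) - y (Suc n))) + a \<in> {0..1}"
    using U_range[OF rf z01] UT1 a0 by auto
  have UH1: "U (Hmap U kk (Tn - d)) + a \<in> {0..1}"
    using U_H[OF rf r2(1)] UTnd UTnd0 UTn Kn a0 k0 by auto
  have "Hmap U a (Hmap U kk (Tn - d)) \<le> Hmap U a (T1 - (x (Suc n) - y (Suc n)))"
    by (rule H_le[OF rf H1 z01 le1 UH1 r3])
  moreover have "Hmap U a (Hmap U kk (Tn - d)) = Hmap U (KK n) (Tn - d)"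
    using H_comp[OF rf r2(1)] Kn by (simp add: add.commute)
  ultimately show ?case using step.IH n1 a_def Tn_def d_def T1_def by simp
qed

lemma chain_dcpd:
  assumes dc: "dcpd U"
  shows "r \<le> m \<Longrightarrow> 1 \<le> r \<Longrightarrow> 1 - y m \<le> Hmap U (KK r) (x r) - Hmap U (KK r) (y r)"
proof (induction r rule: inc_induct)
  case base
  have "y m \<in> {0..1}" using chain_y[of m] x01[of m] m1 by auto
  then show ?case using xm KK_m H_zero[OF rf] by simp
next
  case (step n)
  have n1: "1 \<le> n" "n < m" using step by auto
  define a where "a = KK (Suc n)"
  define kk where "kk = k n"
  have Kn: "KK n = kk + a" using KK_split[OF n1(2)] a_def kk_def by simp
  have xn: "x n \<in> {0..1}" using x01 n1 by auto
  have yn: "y n \<in> {0..1}" "y n \<le> x n" using chain_y[of n] n1 xn by auto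
  have a0: "0 \<le> a" "a \<le> 1" using KK_nonneg KK_le1 n1 a_def by auto
  have k0: "0 \<le> kk" using kpos n1 kk_def by auto
  have s0: "0 \<le> s n" using spos n1 by auto
  have Ux0: "0 \<le> U (x n)" using U_range[OF rf xn] by auto
  have Uy: "U (y n) \<le> U (x n)" using U_le[OF rf, of "y n" "x n"] yn xn by auto
  have Uy0: "0 \<le> U (y n)" using U_range[OF rf] yn by auto
  have r1: "U (y n) + kk \<in> {0..1}" "U (x n) + kk \<in> {0..1}"
    using xtrig[of n] k0 n1 Uy Uy0 Ux0 kk_def by auto
  define p where "p = Hmap U kk (y n)"
  define d' where "d' = Hmap U kk (x n) - Hmap U kk (y n)"
  have p0: "0 \<le> p" using H_range[OF rf yn(1) r1(1)] p_def by auto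
  have d'0: "0 \<le> d'" using H_le[OF rf yn(1) xn yn(2) r1] d'_def by auto
  have ysn: "y (Suc n) = p + s n" using ystep[of n] n1 p_def kk_def by simp
  have xsn: "x (Suc n) = p + s n + d'" using xstep[of n] n1 p_def d'_def kk_def by simp
  have "x (Suc n) \<le> Uinv U (1 - a)" using x_le_T[of "Suc n"] n1 a_def by auto
  then have mono: "DeltaH U (p + s n) d' a \<le> DeltaH U p d' a"
    using dcpd_mono[OF rf dc a0 d'0 p0, of "p + s n"] s0 xsn by auto
  have "Hmap U a (x (Suc n)) - Hmap U a (y (Suc n)) = DeltaH U (p + s n) d' a"
    unfolding DeltaH_def using xsn ysn by (simp add: algebra_simps)
  moreover have "DeltaH U p d' a = Hmap U (KK n) (x n) - Hmap U (KK n) (y n)"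
    unfolding DeltaH_def d'_def p_def using H_comp[OF rf r1(1), of a] H_comp[OF rf r1(2), of a] Kn
    by (simp add: add.commute)
  ultimately show ?case using step.IH n1 mono a_def by simp
qed

end
end


context
  fixes U R :: "real \<Rightarrow> real" and eps :: real and N :: nat
  assumes rf: "rise_function U"
    and nr: "neuronal_reset R"
    and ep: "eps > 0"
    and epN: "(real N - 1) * eps < 1"
    and N1: "1 \<le> N"
begin

abbreviation "AV \<equiv> aval U eps N"

lemma R_props: "mono_on {0..} R" "R 0 = 0" "\<And>z. z \<ge> 0 \<Longrightarrow> 0 \<le> R z \<and> R z \<le> z"
  using nr unfolding neuronal_reset_def by auto

lemma closed_all: "aval_closed U eps N \<phi> {..<N}"
  unfolding aval_closed_def by auto

lemma trig_sub_N: "trig N \<phi> \<subseteq> {..<N}" unfolding trig_def by auto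

lemma aval_sub: "AV \<phi> \<subseteq> {..<N}"
  unfolding aval_def using closed_all trig_sub_N by (intro Inter_lower) auto

lemma aval_fin: "finite (AV \<phi>)"
  using aval_sub finite_subset by blast

lemma aval_card: "card (AV \<phi>) \<le> N"
  using card_mono[OF _ aval_sub] by fastforce

lemma trig_sub_aval: "trig N \<phi> \<subseteq> AV \<phi>"
  unfolding aval_def by auto

lemma aval_out: "i < N \<Longrightarrow> i \<notin> AV \<phi> \<Longrightarrow> U (\<phi> i) + eps * real (card (AV \<phi>)) < 1"
proof -
  assume i: "i < N" "i \<notin> AV \<phi>"
  then obtain S where S: "trig N \<phi> \<subseteq> S" "aval_closed U eps N \<phi> S" "i \<notin> S"
    unfolding aval_def by auto
  have Ssub: "S \<subseteq> {..<N}" using S(2) unfolding aval_closed_def by auto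
  have "AV \<phi> \<subseteq> S" unfolding aval_def using S by auto
  then have "card (AV \<phi>) \<le> card S" using Ssub by (meson card_mono finite_lessThan finite_subset)
  then have "eps * real (card (AV \<phi>)) \<le> eps * real (card S)" using ep by simp
  moreover have "U (\<phi> i) + eps * real (card S) < 1" using S(2,3) i unfolding aval_closed_def by auto
  ultimately show ?thesis by linarith
qed

lemma aval_closed_self: "aval_closed U eps N \<phi> (AV \<phi>)"
  unfolding aval_closed_def using aval_sub aval_out by auto

lemma aval_in:
  assumes U1: "U 1 = 1" and i: "i \<in> AV \<phi>"
  shows "1 \<le> U (\<phi> i) + eps * (real (card (AV \<phi>)) - 1)"
proof (cases "i \<in> trig N \<phi>")
  case True
  then have "\<phi> i = 1" unfolding trig_def by auto
  moreover have "1 \<le> card (AV \<phi>)" using i aval_fin by (metis One_nat_def Suc_leI card_gt_0_iff empty_iff)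
  ultimately show ?thesis using U1 ep by simp
next
  case False
  show ?thesis
  proof (rule ccontr)
    assume c: "\<not> ?thesis"
    define S where "S = AV \<phi> - {i}"
    have cpos: "0 < card (AV \<phi>)" using i aval_fin[of \<phi>] card_gt_0_iff by blast
    have cS: "real (card S) = real (card (AV \<phi>)) - 1"
      unfolding S_def using cpos i by (simp add: card_Diff_singleton of_nat_diff)
    have "trig N \<phi> \<subseteq> S" unfolding S_def using trig_sub_aval False by auto
    moreover have "aval_closed U eps N \<phi> S"
      unfolding aval_closed_def
    proof (intro conjI allI impI)
      show "S \<subseteq> {..<N}" unfolding S_def using aval_sub by auto
      fix j assume j: "j < N" "j \<notin> S"
      show "U (\<phi> j) + eps * real (card S) < 1"
      proof (cases "j = i")
        case True then show ?thesis using c cS by simp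
      next
        case False
        then have "j \<notin> AV \<phi>" using j S_def by auto
        then have "U (\<phi> j) + eps * real (card (AV \<phi>)) < 1" using aval_out[OF j(1)] by blast
        moreover have "eps * real (card S) = eps * real (card (AV \<phi>)) - eps" by (simp add: cS right_diff_distrib)
        ultimately show ?thesis using ep by linarith
      qed
    qed
    ultimately have "AV \<phi> \<subseteq> S" unfolding aval_def by auto
    then show False using i S_def by auto
  qed
qed

lemma aval_eq_trig: "aval_closed U eps N \<phi> (trig N \<phi>) \<Longrightarrow> AV \<phi> = trig N \<phi>"
  using trig_sub_aval unfolding aval_def by auto

definition "ph01 \<phi> \<longleftrightarrow> (\<forall>i<N. \<phi> i \<in> {0..1})"

lemma post_in:
  assumes ph: "ph01 \<phi>" and i: "i \<in> AV \<phi>"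
  shows "post U R eps N \<phi> i = Uinv U (R (U (\<phi> i) + eps * (real (card (AV \<phi>)) - 1) - 1))"
    "post U R eps N \<phi> i \<in> {0..1}"
    "post U R eps N \<phi> i < 1"
    "post U R eps N \<phi> i \<le> Uinv U (eps * (real (card (AV \<phi>)) - 1))"
proof -
  show eq: "post U R eps N \<phi> i = Uinv U (R (U (\<phi> i) + eps * (real (card (AV \<phi>)) - 1) - 1))"
    unfolding post_def Jmap_def Let_def using i by simp
  define z where "z = U (\<phi> i) + eps * (real (card (AV \<phi>)) - 1) - 1"
  have iN: "i < N" using i aval_sub by auto
  have z0: "0 \<le> z" using aval_in[OF U1[OF rf] i] z_def by simp
  have Ui: "U (\<phi> i) \<le> 1" using U_range[OF rf] ph iN unfolding ph01_def by auto
  have c1: "eps * (real (card (AV \<phi>)) - 1) \<le> eps * (real N - 1)"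
    using aval_card[of \<phi>] ep by (simp add: mult_left_mono)
  have zle: "z \<le> eps * (real (card (AV \<phi>)) - 1)" using z_def Ui by simp
  have Rz: "0 \<le> R z" "R z \<le> z" using R_props(3)[OF z0] by auto
  have lt1: "eps * (real (card (AV \<phi>)) - 1) < 1" using c1 epN by (simp add: mult.commute)
  have e0: "0 \<le> eps * (real (card (AV \<phi>)) - 1)" using z0 zle by simp
  have Rz01: "R z \<in> {0..1}" using Rz zle lt1 by auto
  show "post U R eps N \<phi> i \<in> {0..1}" using eq Uinv_range[OF rf Rz01] z_def by simp
  show "post U R eps N \<phi> i < 1" using eq Uinv_less_iff[OF rf Rz01, of 1] Uinv1[OF rf] z_def Rz zle lt1 by simp
  show "post U R eps N \<phi> i \<le> Uinv U (eps * (real (card (AV \<phi>)) - 1))"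
    using eq Uinv_le_iff[OF rf Rz01, of "eps * (real (card (AV \<phi>)) - 1)"] z_def Rz zle lt1 e0 by simp
qed

lemma post_out:
  assumes ph: "ph01 \<phi>" and i: "i < N" "i \<notin> AV \<phi>"
  shows "post U R eps N \<phi> i = Hmap U (eps * real (card (AV \<phi>))) (\<phi> i)"
    "U (\<phi> i) + eps * real (card (AV \<phi>)) \<in> {0..1}"
    "post U R eps N \<phi> i \<in> {0..1}"
    "post U R eps N \<phi> i < 1"
    "Uinv U (eps * real (card (AV \<phi>))) \<le> post U R eps N \<phi> i"
    "eps * real (card (AV \<phi>)) < 1"
proof -
  show eq: "post U R eps N \<phi> i = Hmap U (eps * real (card (AV \<phi>))) (\<phi> i)"
    unfolding post_def Let_def using i by simp
  have p01: "\<phi> i \<in> {0..1}" using ph i unfolding ph01_def by auto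
  have U0: "0 \<le> U (\<phi> i)" using U_range[OF rf p01] by auto
  have lt: "U (\<phi> i) + eps * real (card (AV \<phi>)) < 1" using aval_out i by auto
  have e0: "0 \<le> eps * real (card (AV \<phi>))" using ep by simp
  show r: "U (\<phi> i) + eps * real (card (AV \<phi>)) \<in> {0..1}" using U0 lt e0 by auto
  show "eps * real (card (AV \<phi>)) < 1" using U0 lt by auto
  show "post U R eps N \<phi> i \<in> {0..1}" using eq H_range[OF rf p01 r] by simp
  show "post U R eps N \<phi> i < 1" using eq Uinv_less_iff[OF rf r, of 1] Uinv1[OF rf] lt unfolding Hmap_def by simp
  show "Uinv U (eps * real (card (AV \<phi>))) \<le> post U R eps N \<phi> i"
    using eq Uinv_le_iff[OF rf _ r, of "eps * real (card (AV \<phi>))"] e0 lt U0 unfolding Hmap_def by simp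
qed

lemma post_range: "ph01 \<phi> \<Longrightarrow> i < N \<Longrightarrow> post U R eps N \<phi> i \<in> {0..1} \<and> post U R eps N \<phi> i < 1"
  using post_in post_out by (cases "i \<in> AV \<phi>") auto

lemma Max_post:
  assumes ph: "ph01 \<phi>"
  shows "Max (post U R eps N \<phi> ` {..<N}) \<in> post U R eps N \<phi> ` {..<N}"
    "\<And>i. i < N \<Longrightarrow> post U R eps N \<phi> i \<le> Max (post U R eps N \<phi> ` {..<N})"
    "0 \<le> Max (post U R eps N \<phi> ` {..<N})" "Max (post U R eps N \<phi> ` {..<N}) < 1"
proof -
  have ne: "post U R eps N \<phi> ` {..<N} \<noteq> {}" using N1 by (auto simp: lessThan_empty_iff)
  show m: "Max (post U R eps N \<phi> ` {..<N}) \<in> post U R eps N \<phi> ` {..<N}" using Max_in[OF _ ne] by simp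
  show "\<And>i. i < N \<Longrightarrow> post U R eps N \<phi> i \<le> Max (post U R eps N \<phi> ` {..<N})" by simp
  show "0 \<le> Max (post U R eps N \<phi> ` {..<N})" using m post_range[OF ph] by auto
  show "Max (post U R eps N \<phi> ` {..<N}) < 1" using m post_range[OF ph] by auto
qed

lemma gap_pos: "ph01 \<phi> \<Longrightarrow> 0 < gap U R eps N \<phi> \<and> gap U R eps N \<phi> \<le> 1"
  unfolding gap_def using Max_post by fastforce

lemma next_ph: "ph01 \<phi> \<Longrightarrow> ph01 (next_state U R eps N \<phi>)"
  unfolding ph01_def next_state_def gap_def
proof (intro allI impI)
  fix i assume ph: "\<forall>i<N. \<phi> i \<in> {0..1}" and i: "i < N"
  have "ph01 \<phi>" using ph unfolding ph01_def by simp
  then show "post U R eps N \<phi> i + (1 - Max (post U R eps N \<phi> ` {..<N})) \<in> {0..1}"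
    using Max_post[of \<phi>] post_range[of \<phi> i] i by auto
qed

lemma next_valid: "ph01 \<phi> \<Longrightarrow> valid_state N (next_state U R eps N \<phi>)"
proof -
  assume ph: "ph01 \<phi>"
  obtain i where i: "i < N" "post U R eps N \<phi> i = Max (post U R eps N \<phi> ` {..<N})"
    using Max_post(1)[OF ph] by auto
  have "next_state U R eps N \<phi> i = 1" unfolding next_state_def gap_def using i by simp
  then show ?thesis using next_ph[OF ph] i unfolding valid_state_def ph01_def by auto
qed

lemma valid_ph: "valid_state N \<phi> \<Longrightarrow> ph01 \<phi>"
  unfolding valid_state_def ph01_def by auto

lemma traj_0: "traj U R eps N \<phi> 0 = \<phi>" unfolding traj_def by simp

lemma traj_Suc: "traj U R eps N \<phi> (Suc r) = next_state U R eps N (traj U R eps N \<phi> r)"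
  unfolding traj_def by simp

lemma traj_ph: "ph01 \<phi> \<Longrightarrow> ph01 (traj U R eps N \<phi> r)"
  by (induction r) (auto simp: traj_0 traj_Suc next_ph)

lemma traj_valid: "valid_state N \<phi> \<Longrightarrow> valid_state N (traj U R eps N \<phi> r)"
  by (cases r) (auto simp: traj_0 traj_Suc next_valid traj_ph valid_ph)

end


context
  fixes U R :: "real \<Rightarrow> real" and eps :: real and N :: nat
  assumes rf: "rise_function U"
    and nr: "neuronal_reset R"
    and ep: "eps > 0"
    and epN: "(real N - 1) * eps < 1"
    and N1: "1 \<le> N"
begin

abbreviation "AV' \<equiv> aval U eps N"
abbreviation "NX \<equiv> next_state U R eps N"
abbreviation "PO \<equiv> post U R eps N"

lemmas ph01_iff = ph01_def[OF rf nr ep epN N1]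

lemmas P4L = post_in[OF rf nr ep epN N1] post_out[OF rf nr ep epN N1] aval_out[OF rf nr ep epN N1]
  aval_in[OF rf nr ep epN N1]

lemma next_le_iff: "NX \<psi> u \<le> NX \<psi> v \<longleftrightarrow> PO \<psi> u \<le> PO \<psi> v"
  unfolding next_state_def by simp

lemma next_less_iff: "NX \<psi> u < NX \<psi> v \<longleftrightarrow> PO \<psi> u < PO \<psi> v"
  unfolding next_state_def by simp

lemma step_order:
  assumes ph: "ph01 N \<psi>" and i0: "i0 < N" "i0 \<notin> AV' \<psi>" and u: "u < N"
  shows "\<psi> u \<le> \<psi> i0 \<Longrightarrow> u \<notin> AV' \<psi>"
    "\<psi> u \<le> \<psi> i0 \<Longrightarrow> NX \<psi> u \<le> NX \<psi> i0"
    "u \<in> AV' \<psi> \<Longrightarrow> NX \<psi> u \<le> NX \<psi> i0"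
    "\<psi> i0 < \<psi> u \<Longrightarrow> u \<notin> AV' \<psi> \<Longrightarrow> NX \<psi> i0 < NX \<psi> u"
proof -
  have pu: "\<psi> u \<in> {0..1}" "\<psi> i0 \<in> {0..1}" using ph u i0 unfolding ph01_iff by auto
  have o0: "U (\<psi> i0) + eps * real (card (AV' \<psi>)) < 1" using P4L(11) i0 by blast
  have Ui0: "0 \<le> U (\<psi> i0)" using U_range[OF rf pu(2)] by auto
  show nin: "u \<notin> AV' \<psi>" if le: "\<psi> u \<le> \<psi> i0"
  proof
    assume uin: "u \<in> AV' \<psi>"
    have "1 \<le> U (\<psi> u) + eps * (real (card (AV' \<psi>)) - 1)" using P4L(12)[OF U1[OF rf] uin] .
    moreover have "U (\<psi> u) \<le> U (\<psi> i0)" using U_le[OF rf, of "\<psi> u" "\<psi> i0"] pu le by auto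
    ultimately show False using o0 ep by (simp add: right_diff_distrib)
  qed
  show "NX \<psi> u \<le> NX \<psi> i0" if le: "\<psi> u \<le> \<psi> i0"
  proof -
    have un: "u \<notin> AV' \<psi>" using nin le .
    have "PO \<psi> u = Hmap U (eps * real (card (AV' \<psi>))) (\<psi> u)" using P4L(5)[OF ph u un] .
    moreover have "PO \<psi> i0 = Hmap U (eps * real (card (AV' \<psi>))) (\<psi> i0)" using P4L(5)[OF ph i0] .
    moreover have "Hmap U (eps * real (card (AV' \<psi>))) (\<psi> u) \<le> Hmap U (eps * real (card (AV' \<psi>))) (\<psi> i0)"
      using H_le[OF rf pu le P4L(6)[OF ph u un] P4L(6)[OF ph i0]] .
    ultimately show ?thesis using next_le_iff by simp
  qed
  show "NX \<psi> u \<le> NX \<psi> i0" if uin: "u \<in> AV' \<psi>"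
  proof -
    have "PO \<psi> u \<le> Uinv U (eps * (real (card (AV' \<psi>)) - 1))" using P4L(4)[OF ph uin] .
    moreover have "Uinv U (eps * (real (card (AV' \<psi>)) - 1)) < Uinv U (eps * real (card (AV' \<psi>)))"
    proof -
      have c1: "1 \<le> card (AV' \<psi>)" using uin aval_fin[OF rf nr ep epN N1, of \<psi>]
        by (metis One_nat_def Suc_leI card_gt_0_iff empty_iff)
      have "0 \<le> eps * (real (card (AV' \<psi>)) - 1)" using c1 ep by simp
      moreover have "eps * real (card (AV' \<psi>)) < 1" using P4L(10)[OF ph i0] .
      ultimately show ?thesis using Uinv_less_iff[OF rf, of "eps * (real (card (AV' \<psi>)) - 1)" "eps * real (card (AV' \<psi>))"] ep
        by (simp add: right_diff_distrib)
    qed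
    moreover have "Uinv U (eps * real (card (AV' \<psi>))) \<le> PO \<psi> i0" using P4L(9)[OF ph i0] .
    ultimately show ?thesis using next_le_iff by simp
  qed
  show "NX \<psi> i0 < NX \<psi> u" if lt: "\<psi> i0 < \<psi> u" and un: "u \<notin> AV' \<psi>"
  proof -
    have "PO \<psi> u = Hmap U (eps * real (card (AV' \<psi>))) (\<psi> u)" using P4L(5)[OF ph u un] .
    moreover have "PO \<psi> i0 = Hmap U (eps * real (card (AV' \<psi>))) (\<psi> i0)" using P4L(5)[OF ph i0] .
    moreover have "Hmap U (eps * real (card (AV' \<psi>))) (\<psi> i0) < Hmap U (eps * real (card (AV' \<psi>))) (\<psi> u)"
      using H_less[OF rf pu(2,1) lt P4L(6)[OF ph i0] P4L(6)[OF ph u un]] .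
    ultimately show ?thesis using next_less_iff by simp
  qed
qed

lemma first_order:
  assumes ph: "ph01 N \<phi>" and i0: "i0 \<in> trig N \<phi>"
  shows "u \<in> AV' \<phi> \<Longrightarrow> NX \<phi> u \<le> NX \<phi> i0"
    "u < N \<Longrightarrow> u \<notin> AV' \<phi> \<Longrightarrow> NX \<phi> i0 < NX \<phi> u"
proof -
  have i0A: "i0 \<in> AV' \<phi>" using i0 trig_sub_aval[OF rf nr ep epN N1] by auto
  have p1: "\<phi> i0 = 1" using i0 unfolding trig_def by auto
  have c1: "1 \<le> card (AV' \<phi>)" using i0A aval_fin[OF rf nr ep epN N1, of \<phi>]
    by (metis One_nat_def Suc_leI card_gt_0_iff empty_iff)
  define c where "c = eps * (real (card (AV' \<phi>)) - 1)"
  have c0: "0 \<le> c" using c1 ep c_def by simp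
  have cl: "c < 1"
  proof -
    have "card (AV' \<phi>) \<le> N" using aval_card[OF rf nr ep epN N1] .
    then have "c \<le> (real N - 1) * eps" using ep c_def by (simp add: mult.commute mult_left_mono)
    then show ?thesis using epN by simp
  qed
  have Ri0: "PO \<phi> i0 = Uinv U (R c)" using P4L(1)[OF ph i0A] p1 U1[OF rf] c_def by simp
  have Rc: "0 \<le> R c" "R c \<le> c" using R_props(3)[OF rf nr ep epN N1 c0] by auto
  show "NX \<phi> u \<le> NX \<phi> i0" if uA: "u \<in> AV' \<phi>"
  proof -
    have uN: "u < N" using uA aval_sub[OF rf nr ep epN N1] by auto
    define z where "z = U (\<phi> u) + c - 1"
    have pu: "\<phi> u \<in> {0..1}" using ph uN unfolding ph01_iff by auto
    have z0: "0 \<le> z" using P4L(12)[OF U1[OF rf] uA] z_def c_def by simp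
    have zc: "z \<le> c" using U_range[OF rf pu] z_def by simp
    have Rz: "0 \<le> R z" "R z \<le> R c"
      using R_props(3)[OF rf nr ep epN N1 z0] mono_onD[OF R_props(1)[OF rf nr ep epN N1], of z c] z0 c0 zc by auto
    have "PO \<phi> u = Uinv U (R z)" using P4L(1)[OF ph uA] z_def c_def by simp
    moreover have "Uinv U (R z) \<le> Uinv U (R c)"
      using Uinv_le_iff[OF rf, of "R z" "R c"] Rz Rc cl by simp
    ultimately show ?thesis using Ri0 next_le_iff by simp
  qed
  show "NX \<phi> i0 < NX \<phi> u" if uN: "u < N" and un: "u \<notin> AV' \<phi>"
  proof -
    have "eps * real (card (AV' \<phi>)) < 1" using P4L(10)[OF ph uN un] .
    then have "Uinv U (R c) < Uinv U (eps * real (card (AV' \<phi>)))"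
      using Uinv_less_iff[OF rf, of "R c" "eps * real (card (AV' \<phi>))"] Rc c_def cl ep c0
      by (simp add: right_diff_distrib)
    then show ?thesis using P4L(9)[OF ph uN un] Ri0 next_less_iff by simp
  qed
qed

lemma count:
  assumes real: "realizes U R eps N \<phi> F" and tinv: "\<forall>i\<in>trig N \<phi>. traj U R eps N \<phi> (length F) i = 1"
  shows "card (AV' \<phi>) + (\<Sum>r\<in>{1..<length F}. card (AV' (traj U R eps N \<phi> r))) = N"
proof -
  define m where "m = length F"
  define TR where "TR = traj U R eps N \<phi>"
  define A where "A = (\<lambda>r. AV' (TR r))"
  define B where "B = (\<lambda>r. \<Union>s<r. A s)"
  have val: "valid_state N \<phi>" and Fne: "F \<noteq> []"
    and nf: "\<And>r. r \<in> {1..<m} \<Longrightarrow> A r \<inter> trig N \<phi> = {}"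
    using real unfolding realizes_def m_def A_def TR_def by auto
  have m1: "1 \<le> m" using Fne m_def by (cases F) auto
  obtain i0 where i0: "i0 \<in> trig N \<phi>" using val unfolding valid_state_def trig_def by auto
  have i0N: "i0 < N" using i0 unfolding trig_def by auto
  have ph: "\<And>r. ph01 N (TR r)" using traj_ph[OF rf nr ep epN N1] valid_ph[OF rf nr ep epN N1] val TR_def by blast
  have TRS: "\<And>r. TR (Suc r) = NX (TR r)" using traj_Suc[OF rf nr ep epN N1] TR_def by blast
  have TR0: "TR 0 = \<phi>" using traj_0[OF rf nr ep epN N1] TR_def by blast
  have i0n: "\<And>r. 1 \<le> r \<Longrightarrow> r < m \<Longrightarrow> i0 \<notin> A r" using nf i0 by auto
  have BS: "\<And>r. B (Suc r) = B r \<union> A r" unfolding B_def by (auto simp: lessThan_Suc)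
  have inv: "\<forall>u<N. (u \<in> B r \<longrightarrow> TR r u \<le> TR r i0) \<and> (u \<notin> B r \<longrightarrow> TR r i0 < TR r u)"
    if r: "1 \<le> r" "r \<le> m" for r
    using r
  proof (induction r rule: dec_induct)
    case base
    have "B 1 = A 0" unfolding B_def by (simp add: lessThan_Suc)
    then show ?case using first_order[of \<phi> i0] ph[of 0] i0 TR0 TRS[of 0] A_def by auto
  next
    case (step n)
    have n1: "1 \<le> n" "n < m" using step by auto
    have i0nA: "i0 \<notin> A n" using i0n n1 by auto
    have IH: "\<forall>u<N. (u \<in> B n \<longrightarrow> TR n u \<le> TR n i0) \<and> (u \<notin> B n \<longrightarrow> TR n i0 < TR n u)"
      using step.IH n1 by auto
    show ?case
    proof (intro allI impI conjI)
      fix u assume u: "u < N"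
      show "u \<in> B (Suc n) \<Longrightarrow> TR (Suc n) u \<le> TR (Suc n) i0"
        using IH u step_order(2,3)[OF ph[of n] i0N _ u] i0nA BS TRS A_def by auto
      show "u \<notin> B (Suc n) \<Longrightarrow> TR (Suc n) i0 < TR (Suc n) u"
        using IH u step_order(4)[OF ph[of n] i0N _ u] i0nA BS TRS A_def by auto
    qed
  qed
  have disj: "A r \<inter> B r = {}" if r: "1 \<le> r" "r < m" for r
  proof -
    have "u \<notin> A r" if "u \<in> B r" for u
    proof -
      have uN: "u < N" using that unfolding B_def A_def using aval_sub[OF rf nr ep epN N1] by auto
      then show ?thesis using inv[of r] r that step_order(1)[OF ph[of r] i0N _ uN] i0n[of r] A_def by auto
    qed
    then show ?thesis by auto
  qed
  have Bm: "B m = {..<N}"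
  proof
    show "B m \<subseteq> {..<N}" unfolding B_def A_def using aval_sub[OF rf nr ep epN N1] by auto
    show "{..<N} \<subseteq> B m"
    proof
      fix u assume "u \<in> {..<N}"
      then have u: "u < N" by auto
      have "TR m i0 = 1" using tinv i0 TR_def m_def by auto
      moreover have "TR m u \<le> 1" using ph[of m] u unfolding ph01_iff by auto
      ultimately show "u \<in> B m" using inv[of m] m1 u by fastforce
    qed
  qed
  have "card (B m) = (\<Sum>s<m. card (A s))"
    unfolding B_def
  proof (rule card_UN_disjoint)
    show "finite {..<m}" by simp
    show "\<forall>i\<in>{..<m}. finite (A i)" using aval_fin[OF rf nr ep epN N1] A_def by auto
    show "\<forall>i\<in>{..<m}. \<forall>j\<in>{..<m}. i \<noteq> j \<longrightarrow> A i \<inter> A j = {}"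
    proof (intro ballI impI)
      fix i j assume ij: "i \<in> {..<m}" "j \<in> {..<m}" "i \<noteq> j"
      show "A i \<inter> A j = {}"
      proof (cases "i < j")
        case True
        then have "A i \<subseteq> B j" unfolding B_def by auto
        then show ?thesis using disj[of j] True ij by auto
      next
        case False
        then have "j < i" using ij by auto
        then have "A j \<subseteq> B i" unfolding B_def by auto
        then show ?thesis using disj[of i] \<open>j < i\<close> ij by auto
      qed
    qed
  qed
  then have "N = (\<Sum>s<m. card (A s))" using Bm by simp
  also have "\<dots> = card (A 0) + (\<Sum>s\<in>{1..<m}. card (A s))"
    using m1 by (simp add: lessThan_atLeast0 sum.atLeast_Suc_lessThan)
  finally show ?thesis using A_def TR0 TR_def m_def by simp
qed

end


context
  fixes U R :: "real \<Rightarrow> real" and eps :: real and N :: nat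
  assumes rf: "rise_function U"
    and nr: "neuronal_reset R"
    and ep: "eps > 0"
    and epN: "(real N - 1) * eps < 1"
    and N1: "1 \<le> N"
begin

lemma suff:
  assumes tinv: "trigger_invariant U R eps N F" and hdF: "fst (hd F) = a1" and a: "1 \<le> a" "a < a1"
    and hyp: "(icpd U \<and> condA U R eps N a1 a) \<or> (dcpd U \<and> condB U R eps N a1 a)"
  shows "Uinv U (1 - real a * eps) \<le> Mmap U R eps F (Uinv U (1 - real a * eps))"
proof -
  obtain \<phi> where real: "realizes U R eps N \<phi> F" and tin: "\<forall>i\<in>trig N \<phi>. traj U R eps N \<phi> (length F) i = 1"
    using tinv unfolding trigger_invariant_def by auto
  define m where "m = length F"
  define TR where "TR = traj U R eps N \<phi>"
  define A where "A = (\<lambda>r. aval U eps N (TR r))"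
  have val: "valid_state N \<phi>" and Fne: "F \<noteq> []"
    and Fr: "\<And>r. r < m \<Longrightarrow> F ! r = (card (A r), gap U R eps N (TR r))"
    and nf: "\<And>r. r \<in> {1..<m} \<Longrightarrow> A r \<inter> trig N \<phi> = {}"
    using real unfolding realizes_def m_def A_def TR_def by auto
  have m1: "1 \<le> m" using Fne m_def by (cases F) auto
  obtain i0 where i0: "i0 \<in> trig N \<phi>" using val unfolding valid_state_def trig_def by auto
  have i0N: "i0 < N" and phi0: "\<phi> i0 = 1" using i0 unfolding trig_def by auto
  have ph: "\<And>r. ph01 N (TR r)" using traj_ph[OF rf nr ep epN N1] valid_ph[OF rf nr ep epN N1] val TR_def by blast
  have TRS: "\<And>r. TR (Suc r) = next_state U R eps N (TR r)" using traj_Suc[OF rf nr ep epN N1] TR_def by blast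
  have TR0: "TR 0 = \<phi>" using traj_0[OF rf nr ep epN N1] TR_def by blast
  have i0n: "\<And>r. 1 \<le> r \<Longrightarrow> r < m \<Longrightarrow> i0 \<notin> A r" using nf i0 by auto
  have hd0: "hd F = F ! 0" using Fne by (simp add: hd_conv_nth)
  have a1eq: "a1 = card (A 0)" using hdF hd0 Fr[of 0] m1 by simp
  have sig1: "snd (hd F) = gap U R eps N \<phi>" using hd0 Fr[of 0] m1 TR0 by simp
  have cnt: "card (A 0) + (\<Sum>r\<in>{1..<m}. card (A r)) = N"
    using count[OF rf nr ep epN N1 real tin] A_def TR_def TR0 m_def by simp
  have a1N: "a1 \<le> N" using cnt a1eq by linarith
  have aN: "real a * eps \<le> (real N - 1) * eps" using a a1N ep by (simp add: mult_right_mono)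
  have ae0: "0 \<le> real a * eps" using ep by simp
  define p where "p = Uinv U (1 - real a * eps)"
  have pr: "1 - real a * eps \<in> {0..1}" using aN epN ae0 by auto
  have Up: "U p = 1 - real a * eps" using U_Uinv[OF rf pr] p_def by simp
  define c where "c = (real a1 - 1) * eps"
  have ca: "real a * eps \<le> c" using a ep unfolding c_def by (simp add: mult_right_mono)
  have c1: "c < 1" using a1N epN ep c_def by (smt (verit) mult_right_mono of_nat_le_iff)
  have Rc: "0 \<le> R c" "R c \<le> c" using R_props(3)[OF rf nr ep epN N1, of c] ca ae0 by auto
  have Rca: "0 \<le> R (c - real a * eps)" "R (c - real a * eps) \<le> R c"
    using R_props(3)[OF rf nr ep epN N1, of "c - real a * eps"]
      mono_onD[OF R_props(1)[OF rf nr ep epN N1], of "c - real a * eps" c] ca ae0 by auto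
  have Rc01: "R c \<in> {0..1}" "R (c - real a * eps) \<in> {0..1}" using Rc Rca c1 by auto
  define x0 where "x0 = Uinv U (R c)"
  define y0 where "y0 = Uinv U (R (c - real a * eps))"
  have x001: "x0 \<in> {0..1}" "y0 \<in> {0..1}" using Uinv_range[OF rf] Rc01 x0_def y0_def by auto
  have y0x0: "y0 \<le> x0" using Uinv_le_iff[OF rf Rc01(2,1)] Rca x0_def y0_def by simp
  have Ux0: "U x0 = R c" "U y0 = R (c - real a * eps)" using U_Uinv[OF rf] Rc01 x0_def y0_def by auto
  have J1: "Jmap U R (eps * (real a1 - 1)) 1 = x0"
    unfolding Jmap_def x0_def c_def using U1[OF rf] by (simp add: mult.commute)
  have Jp: "Jmap U R (eps * (real a1 - 1)) p = y0"
  proof -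
    have "U p + eps * (real a1 - 1) - 1 = c - real a * eps" using Up c_def by (simp add: algebra_simps)
    then show ?thesis unfolding Jmap_def y0_def by simp
  qed
  define k where "k = (\<lambda>r. eps * real (card (A r)))"
  define s where "s = (\<lambda>r. gap U R eps N (TR r))"
  define x where "x = (\<lambda>r. TR r i0)"
  define g where "g = (\<lambda>v (b::nat, t::real). Smap t (Hmap U (eps * real b) v))"
  define z0 where "z0 = Smap (snd (hd F)) (Jmap U R (eps * (real (fst (hd F)) - 1)) p)"
  define y where "y = (\<lambda>r. foldl g z0 (take (r - 1) (tl F)))"
  have MM: "Mmap U R eps F p = y m"
    unfolding Mmap_def y_def z0_def g_def using m_def by (simp add: case_prod_beta)
  have sig0: "0 < gap U R eps N \<phi>" using gap_pos[OF rf nr ep epN N1 ph[of 0]] TR0 by simp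
  have y1: "y 1 = y0 + gap U R eps N \<phi>" unfolding y_def z0_def using hdF Jp sig1 Smap_def by simp
  have x1: "x 1 = x0 + gap U R eps N \<phi>"
  proof -
    have i0A: "i0 \<in> A 0" using i0 trig_sub_aval[OF rf nr ep epN N1] A_def TR0 by auto
    have "post U R eps N \<phi> i0 = x0"
      unfolding post_def Let_def using i0A A_def TR0 phi0 J1 a1eq by simp
    then show ?thesis unfolding x_def using TRS[of 0] TR0 next_state_def by simp
  qed
  have x01: "\<And>r. 1 \<le> r \<Longrightarrow> r \<le> m \<Longrightarrow> x r \<in> {0..1}"
    using ph i0N unfolding x_def ph01_def[OF rf nr ep epN N1] by auto
  have xstep: "\<And>r. 1 \<le> r \<Longrightarrow> r < m \<Longrightarrow> x (Suc r) = Hmap U (k r) (x r) + s r"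
  proof -
    fix r assume r: "1 \<le> r" "r < m"
    have "post U R eps N (TR r) i0 = Hmap U (k r) (x r)"
      using post_out(1)[OF rf nr ep epN N1 ph[of r] i0N] i0n[OF r] A_def k_def x_def by simp
    then show "x (Suc r) = Hmap U (k r) (x r) + s r" unfolding x_def s_def using TRS[of r] next_state_def by simp
  qed
  have ystep: "\<And>r. 1 \<le> r \<Longrightarrow> r < m \<Longrightarrow> y (Suc r) = Hmap U (k r) (y r) + s r"
  proof -
    fix r assume r: "1 \<le> r" "r < m"
    have lt: "r - 1 < length (tl F)" using r m_def by simp
    have tk: "take r (tl F) = take (r - 1) (tl F) @ [tl F ! (r - 1)]"
      using take_Suc_conv_app_nth[OF lt] r by simp
    have nt: "tl F ! (r - 1) = F ! r" using nth_tl[OF lt] r by simp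
    have "y (Suc r) = g (y r) (F ! r)" unfolding y_def using tk nt by simp
    then show "y (Suc r) = Hmap U (k r) (y r) + s r" using Fr[of r] r unfolding g_def k_def s_def Smap_def by simp
  qed
  have kpos: "\<And>r. 1 \<le> r \<Longrightarrow> r < m \<Longrightarrow> 0 \<le> k r" using ep k_def by simp
  have spos: "\<And>r. 1 \<le> r \<Longrightarrow> r < m \<Longrightarrow> 0 \<le> s r" using gap_pos[OF rf nr ep epN N1] ph s_def less_imp_le by blast
  have xtrig: "\<And>r. 1 \<le> r \<Longrightarrow> r < m \<Longrightarrow> U (x r) + k r < 1"
    using aval_out[OF rf nr ep epN N1 i0N] i0n A_def k_def x_def by blast
  have xm: "x m = 1" using tin i0 x_def TR_def m_def by simp
  have ya: "0 \<le> y 1" "y 1 \<le> x 1" using y1 x1 x001 y0x0 sig0 by auto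
  note CH = rf m1 x01 xstep ystep kpos spos xtrig xm ya
  have KK1: "KK k m 1 = (real N - real a1) * eps"
  proof -
    have "KK k m 1 = (\<Sum>r\<in>{1..<m}. k r)" using KK_def[OF CH] by simp
    also have "\<dots> = eps * real (\<Sum>r\<in>{1..<m}. card (A r))" unfolding k_def by (simp add: sum_distrib_left)
    also have "\<dots> = (real N - real a1) * eps"
    proof -
      have "real (\<Sum>r\<in>{1..<m}. card (A r)) = real N - real a1" using cnt a1eq by (metis add_diff_cancel_left' of_nat_add add.commute diff_add_cancel)
      then show ?thesis by simp
    qed
    finally show ?thesis .
  qed
  define K where "K = (real N - real a1) * eps"
  have K0: "0 \<le> K" using a1N ep K_def by simp
  have Ka: "K + real a * eps \<le> (real N - 1) * eps"
  proof -
    have "real a + 1 \<le> real a1" using a by simp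
    then have "(real a + 1) * eps \<le> real a1 * eps" using ep by (simp add: mult_right_mono)
    then show ?thesis unfolding K_def by (simp add: algebra_simps)
  qed
  have Kr: "1 - K \<in> {0..1}" "1 - K - real a * eps \<in> {0..1}" using Ka K0 ae0 epN by auto
  show ?thesis
  proof (cases "icpd U \<and> condA U R eps N a1 a")
    case True
    then have ic: "icpd U" and cA: "condA U R eps N a1 a" by auto
    have main: "Hmap U K (Uinv U (1 - K) - (x 1 - y 1)) \<le> y m"
      using chain_icpd[OF CH ic, of 1] m1 KK1 K_def by simp
    define T where "T = Uinv U (1 - K)"
    define w where "w = Uinv U (1 - K - real a * eps)"
    have T01: "T \<in> {0..1}" "U T = 1 - K" using Uinv_range[OF rf Kr(1)] U_Uinv[OF rf Kr(1)] T_def by auto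
    have w01: "w \<in> {0..1}" "U w = 1 - K - real a * eps" using Uinv_range[OF rf Kr(2)] U_Uinv[OF rf Kr(2)] w_def by auto
    have dd: "x 1 - y 1 = x0 - y0" using x1 y1 by simp
    have cA': "x0 - y0 \<le> T - w" using cA unfolding condA_def x0_def y0_def T_def w_def c_def K_def by simp
    have wle: "w \<le> T - (x0 - y0)" using cA' by simp
    have Td: "T - (x0 - y0) \<in> {0..1}" using wle w01 T01 y0x0 by auto
    have UTd: "U (T - (x0 - y0)) \<le> U T" using U_le[OF rf, of "T - (x0 - y0)" T] Td T01 y0x0 by auto
    have r1: "U w + K \<in> {0..1}" using w01 ae0 K0 Kr by auto
    have r2: "U (T - (x0 - y0)) + K \<in> {0..1}" using UTd T01 U_range[OF rf Td] K0 by auto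
    have "Hmap U K w \<le> Hmap U K (T - (x0 - y0))" using H_le[OF rf w01(1) Td wle r1 r2] .
    moreover have "Hmap U K w = Uinv U (1 - real a * eps)" unfolding Hmap_def using w01 by simp
    ultimately show ?thesis using main dd T_def MM p_def by simp
  next
    case False
    then have dc: "dcpd U" and cB: "condB U R eps N a1 a" using hyp by auto
    have main: "1 - y m \<le> Hmap U K (x 1) - Hmap U K (y 1)"
      using chain_dcpd[OF CH dc, of 1] m1 KK1 K_def by simp
    have xT: "x 1 \<le> Uinv U (1 - K)" using x_le_T[OF CH, of 1] m1 KK1 K_def by simp
    have K1: "K \<le> 1" using Kr by auto
    have mono: "DeltaH U (y0 + gap U R eps N \<phi>) (x0 - y0) K \<le> DeltaH U y0 (x0 - y0) K"
      apply (rule dcpd_mono[OF rf dc K0 K1])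
      using y0x0 x001 sig0 xT x1 by auto
    then have "Hmap U K (x 1) - Hmap U K (y 1) \<le> Hmap U K x0 - Hmap U K y0"
      unfolding DeltaH_def using x1 y1 by (simp add: algebra_simps)
    moreover have "Hmap U K x0 - Hmap U K y0 \<le> 1 - Uinv U (1 - real a * eps)"
      using cB unfolding condB_def Hmap_def Ux0 K_def c_def by simp
    ultimately show ?thesis using main MM p_def by simp
  qed
qed

end


lemma Max_eq_lt: "(\<And>i. i < N \<Longrightarrow> f i \<le> v) \<Longrightarrow> j < N \<Longrightarrow> f j = v \<Longrightarrow> Max (f ` {..<(N::nat)}) = (v::real)"
  by (rule Max_eqI) auto

context
  fixes U R :: "real \<Rightarrow> real" and eps :: real and N :: nat
  assumes rf: "rise_function U"
    and nr: "neuronal_reset R"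
    and ep: "eps > 0"
    and epN: "(real N - 1) * eps < 1"
    and N1: "1 \<le> N"
begin

lemma nec_eq:
  assumes inv: "invariant_under_return U R eps N N" and a: "1 \<le> a" "a < N"
  shows "condB U R eps N N a"
proof -
  define \<phi> where "\<phi> = (\<lambda>i::nat. 1::real)"
  define c where "c = (real N - 1) * eps"
  have c0: "0 \<le> c" using N1 ep c_def by simp
  have c1: "c < 1" using epN c_def by simp
  have Rc: "0 \<le> R c" "R c \<le> c" using R_props(3)[OF rf nr ep epN N1 c0] by auto
  define x0 where "x0 = Uinv U (R c)"
  have x01: "x0 \<in> {0..1}" using Uinv_range[OF rf] Rc c1 x0_def by auto
  have trig: "trig N \<phi> = {..<N}" unfolding trig_def \<phi>_def by auto
  have av: "aval U eps N \<phi> = {..<N}"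
    using aval_eq_trig[OF rf nr ep epN N1, of \<phi>] closed_all[OF rf nr ep epN N1, of \<phi>] trig by simp
  have po: "\<And>i. i < N \<Longrightarrow> post U R eps N \<phi> i = x0"
  proof -
    fix i assume i: "i < N"
    have "\<phi> i = 1" unfolding \<phi>_def by simp
    then show "post U R eps N \<phi> i = x0"
      unfolding post_def Let_def av Jmap_def x0_def c_def using U1[OF rf] i by (simp add: mult.commute)
  qed
  have gp: "gap U R eps N \<phi> = 1 - x0"
    unfolding gap_def using Max_eq_lt[of N "post U R eps N \<phi>" x0 0] po N1 by simp
  have t1: "traj U R eps N \<phi> 1 = (\<lambda>i. post U R eps N \<phi> i + (1 - x0))"
    unfolding traj_def next_state_def using gp by simp
  have t1N: "\<And>i. i < N \<Longrightarrow> traj U R eps N \<phi> 1 i = 1" using t1 po by simp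
  define F where "F = [(N, 1 - x0)]"
  have val: "valid_state N \<phi>" unfolding valid_state_def \<phi>_def using N1 by (auto intro: exI[of _ 0])
  have "0 \<in> trig N (traj U R eps N \<phi> 1)" unfolding trig_def using t1N N1 by auto
  then have "0 \<in> aval U eps N (traj U R eps N \<phi> 1)" using trig_sub_aval[OF rf nr ep epN N1] by blast
  then have A1: "0 \<in> aval U eps N (traj U R eps N \<phi> 1)" .
  have t0: "traj U R eps N \<phi> 0 = \<phi>" unfolding traj_def by simp
  have re: "realizes U R eps N \<phi> F"
    unfolding realizes_def
  proof (intro conjI)
    show "valid_state N \<phi>" by (rule val)
    show "F \<noteq> []" unfolding F_def by simp
    show "\<forall>r<length F. F ! r = (card (aval U eps N (traj U R eps N \<phi> r)), gap U R eps N (traj U R eps N \<phi> r))"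
      unfolding F_def using t0 av gp by simp
    show "\<forall>r\<in>{1..<length F}. aval U eps N (traj U R eps N \<phi> r) \<inter> trig N \<phi> = {}" unfolding F_def by simp
    show "aval U eps N (traj U R eps N \<phi> (length F)) \<inter> trig N \<phi> \<noteq> {}"
      unfolding F_def using A1 trig N1 by auto
  qed
  have ti: "trigger_invariant U R eps N F"
    unfolding trigger_invariant_def
  proof (intro exI conjI)
    show "realizes U R eps N \<phi> F" by (rule re)
    show "\<forall>i\<in>trig N \<phi>. traj U R eps N \<phi> (length F) i = 1" using t1N trig F_def by simp
  qed
  have ad: "admissible U R eps N F" unfolding admissible_def using re by blast
  have aa: "a \<in> {1..<N}" using a by simp
  have "Uinv U (1 - real a * eps) \<le> Mmap U R eps F (Uinv U (1 - real a * eps))"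
  proof -
    have H: "\<forall>a\<in>{1..<N}. \<forall>F. admissible U R eps N F \<and> trigger_invariant U R eps N F \<and> fst (hd F) = N \<longrightarrow>
        Uinv U (1 - real a * eps) \<le> Mmap U R eps F (Uinv U (1 - real a * eps))"
      using inv unfolding invariant_under_return_def by simp
    have fh: "fst (hd F) = N" by (simp add: F_def)
    show ?thesis using bspec[OF H aa] ad ti fh by blast
  qed
  moreover have aN: "real a * eps \<le> (real N - 1) * eps" using a ep by (simp add: mult_right_mono)
  have "0 \<le> real a * eps" using ep by simp
  then have pr: "1 - real a * eps \<in> {0..1}" unfolding atLeastAtMost_iff using aN epN by linarith
  have "Mmap U R eps F (Uinv U (1 - real a * eps)) = Uinv U (R (c - real a * eps)) + (1 - x0)"
  proof -
    have "U (Uinv U (1 - real a * eps)) + eps * (real N - 1) - 1 = c - real a * eps"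
      using U_Uinv[OF rf pr] c_def by (simp add: algebra_simps)
    then show ?thesis unfolding Mmap_def F_def Smap_def Jmap_def by simp
  qed
  ultimately show ?thesis unfolding condB_def x0_def c_def by simp
qed

lemma B_imp_A:
  assumes dc: "dcpd U" and a1: "a1 \<le> N" and a: "1 \<le> a" "a < a1" and cB: "condB U R eps N a1 a"
  shows "condA U R eps N a1 a"
proof -
  define c where "c = (real a1 - 1) * eps"
  define K where "K = (real N - real a1) * eps"
  have ae0: "0 \<le> real a * eps" using ep by simp
  have ca: "real a * eps \<le> c" using a ep unfolding c_def by (simp add: mult_right_mono)
  have cK: "c + K = (real N - 1) * eps" unfolding c_def K_def by (simp add: algebra_simps)
  have K0: "0 \<le> K" using a1 ep K_def by simp
  have Rc: "0 \<le> R c" "R c \<le> c" using R_props(3)[OF rf nr ep epN N1, of c] ca ae0 by auto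
  have Rca: "0 \<le> R (c - real a * eps)" "R (c - real a * eps) \<le> R c"
    using R_props(3)[OF rf nr ep epN N1, of "c - real a * eps"]
      mono_onD[OF R_props(1)[OF rf nr ep epN N1], of "c - real a * eps" c] ca ae0 by auto
  have Rc01: "R c \<in> {0..1}" "R (c - real a * eps) \<in> {0..1}" using Rc Rca cK K0 epN by auto
  define x0 where "x0 = Uinv U (R c)"
  define y0 where "y0 = Uinv U (R (c - real a * eps))"
  have x001: "x0 \<in> {0..1}" "y0 \<in> {0..1}" using Uinv_range[OF rf] Rc01 x0_def y0_def by auto
  have y0x0: "y0 \<le> x0" using Uinv_le_iff[OF rf Rc01(2,1)] Rca x0_def y0_def by simp
  have Ux0: "U x0 = R c" "U y0 = R (c - real a * eps)" using U_Uinv[OF rf] Rc01 x0_def y0_def by auto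
  have Ka: "K + real a * eps \<le> (real N - 1) * eps" using cK ca by simp
  have Kr: "1 - K \<in> {0..1}" "1 - K - real a * eps \<in> {0..1}" using Ka K0 ae0 epN by auto
  define T where "T = Uinv U (1 - K)"
  define w where "w = Uinv U (1 - K - real a * eps)"
  have T01: "T \<in> {0..1}" "U T = 1 - K" using Uinv_range[OF rf Kr(1)] U_Uinv[OF rf Kr(1)] T_def by auto
  have w01: "w \<in> {0..1}" "U w = 1 - K - real a * eps" using Uinv_range[OF rf Kr(2)] U_Uinv[OF rf Kr(2)] w_def by auto
  have xT: "x0 \<le> T"
  proof -
    have "R c \<le> 1 - K" using Rc cK epN by simp
    then show ?thesis using Uinv_le_iff[OF rf Rc01(1) Kr(1)] x0_def T_def by simp
  qed
  have K1: "K \<le> 1" using Kr by auto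
  have mono: "DeltaH U (T - (x0 - y0)) (x0 - y0) K \<le> DeltaH U y0 (x0 - y0) K"
    apply (rule dcpd_mono[OF rf dc K0 K1]) using y0x0 x001 xT T_def by auto
  have HT: "Hmap U K T = 1" unfolding Hmap_def using T01 Uinv1[OF rf] by simp
  have "Hmap U K x0 - Hmap U K y0 \<le> 1 - Uinv U (1 - real a * eps)"
    using cB unfolding condB_def Hmap_def Ux0 K_def c_def by simp
  then have le: "Uinv U (1 - real a * eps) \<le> Hmap U K (T - (x0 - y0))"
    using mono HT unfolding DeltaH_def by simp
  have "w \<le> T - (x0 - y0)"
  proof (rule ccontr)
    assume "\<not> ?thesis"
    then have lt: "T - (x0 - y0) < w" by simp
    have Td: "T - (x0 - y0) \<in> {0..1}" using xT x001 y0x0 lt w01 by auto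
    have r1: "U w + K \<in> {0..1}" using w01 ae0 K0 Kr by auto
    have "U (T - (x0 - y0)) \<le> U w" using U_le[OF rf, of "T - (x0 - y0)" w] Td w01 lt by auto
    then have r2: "U (T - (x0 - y0)) + K \<in> {0..1}" using U_range[OF rf Td] r1 K0 by auto
    have "Hmap U K (T - (x0 - y0)) < Hmap U K w" using H_less[OF rf Td w01(1) lt r2 r1] .
    moreover have "Hmap U K w = Uinv U (1 - real a * eps)" unfolding Hmap_def using w01 by simp
    ultimately show False using le by simp
  qed
  then show ?thesis unfolding condA_def using x0_def y0_def T_def w_def c_def K_def by simp
qed

end


context
  fixes U R :: "real \<Rightarrow> real" and eps :: real and N :: nat
  assumes rf: "rise_function U"
    and nr: "neuronal_reset R"
    and ep: "eps > 0"
    and epN: "(real N - 1) * eps < 1"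
    and N1: "1 \<le> N"
begin

lemma construct:
  assumes a1: "2 \<le> a1" "a1 < N" and a: "1 \<le> a" "a < a1"
    and t: "0 < t" "t < 1" "Uinv U (R ((real a1 - 1) * eps)) + t < 1"
      "U (Uinv U (R ((real a1 - 1) * eps)) + t) + (real N - real a1) * eps < 1"
      "real a1 * eps < U (1 - t)"
  shows "\<exists>F. admissible U R eps N F \<and> trigger_invariant U R eps N F \<and> fst (hd F) = a1 \<and>
     Mmap U R eps F (Uinv U (1 - real a * eps)) =
       Uinv U (U (Uinv U (R ((real a1 - 1) * eps - real a * eps)) + t) + (real N - real a1) * eps)
       + (1 - Uinv U (U (Uinv U (R ((real a1 - 1) * eps)) + t) + (real N - real a1) * eps))"
proof -
  define c where "c = (real a1 - 1) * eps"
  define K where "K = (real N - real a1) * eps"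
  have ae0: "0 \<le> real a * eps" using ep by simp
  have ca: "real a * eps \<le> c" using a ep unfolding c_def by (simp add: mult_right_mono)
  have cK: "c + K = (real N - 1) * eps" unfolding c_def K_def by (simp add: algebra_simps)
  have K0: "0 < K" using a1 ep K_def by simp
  have Rc: "0 \<le> R c" "R c \<le> c" using R_props(3)[OF rf nr ep epN N1, of c] ca ae0 by auto
  have Rca: "0 \<le> R (c - real a * eps)" "R (c - real a * eps) \<le> R c"
    using R_props(3)[OF rf nr ep epN N1, of "c - real a * eps"]
      mono_onD[OF R_props(1)[OF rf nr ep epN N1], of "c - real a * eps" c] ca ae0 by auto
  have Rc01: "R c \<in> {0..1}" "R (c - real a * eps) \<in> {0..1}" using Rc Rca cK K0 epN by auto
  define x0 where "x0 = Uinv U (R c)"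
  define y0 where "y0 = Uinv U (R (c - real a * eps))"
  have x001: "x0 \<in> {0..1}" "y0 \<in> {0..1}" using Uinv_range[OF rf] Rc01 x0_def y0_def by auto
  have y0x0: "y0 \<le> x0" using Uinv_le_iff[OF rf Rc01(2,1)] Rca x0_def y0_def by simp
  have tx: "x0 + t < 1" "U (x0 + t) + K < 1" using t x0_def c_def K_def by auto
  have xt01: "x0 + t \<in> {0..1}" "y0 + t \<in> {0..1}" using tx x001 y0x0 t by auto
  define q where "q = U (1 - t)"
  have q01: "q \<in> {0..1}" "q < 1" using U_range[OF rf, of "1-t"] U_less[OF rf, of "1-t" 1] U1[OF rf] t q_def by auto
  have "0 \<le> real a1 * eps" using ep by simp
  then have qa: "q - real a1 * eps \<in> {0..1}" using t(5) q01 q_def by auto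
  define pv where "pv = Uinv U (q - real a1 * eps)"
  have pv01: "pv \<in> {0..1}" "U pv = q - real a1 * eps" using Uinv_range[OF rf qa] U_Uinv[OF rf qa] pv_def by auto
  have pv1: "pv < 1" using Uinv_less_iff[OF rf qa, of 1] Uinv1[OF rf] pv_def q01 \<open>0 \<le> real a1 * eps\<close> by simp
  define \<phi> where "\<phi> = (\<lambda>i::nat. if i < a1 then 1 else pv)"
  have trig0: "trig N \<phi> = {..<a1}" unfolding trig_def \<phi>_def using a1 pv1 by auto
  have cl0: "aval_closed U eps N \<phi> {..<a1}" unfolding aval_closed_def \<phi>_def using a1 pv01 q01 by auto
  have av0: "aval U eps N \<phi> = {..<a1}" using aval_eq_trig[OF rf nr ep epN N1, of \<phi>] cl0 trig0 by simp
  have phv: "\<And>i. \<phi> i = (if i < a1 then 1 else pv)" unfolding \<phi>_def by simp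
  have po0: "\<And>i. i < a1 \<Longrightarrow> post U R eps N \<phi> i = x0"
    unfolding post_def Let_def av0 Jmap_def x0_def c_def using U1[OF rf] phv by (simp add: mult.commute)
  have po0': "\<And>i. a1 \<le> i \<Longrightarrow> post U R eps N \<phi> i = 1 - t"
  proof -
    fix i assume i: "a1 \<le> i"
    have "post U R eps N \<phi> i = Hmap U (eps * real a1) pv" unfolding post_def Let_def av0 using i phv by simp
    also have "\<dots> = 1 - t" unfolding Hmap_def using pv01 Uinv_U[OF rf, of "1 - t"] t q_def by (simp add: mult.commute)
    finally show "post U R eps N \<phi> i = 1 - t" .
  qed
  have gp0: "gap U R eps N \<phi> = t"
  proof -
    have "Max (post U R eps N \<phi> ` {..<N}) = 1 - t"
      apply (rule Max_eq_lt[of N _ _ a1])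
      subgoal for i using po0 po0' tx by (cases "i < a1") auto
      using po0' a1 by auto
    then show ?thesis unfolding gap_def by simp
  qed
  define \<psi> where "\<psi> = traj U R eps N \<phi> 1"
  have psi: "\<And>i. \<psi> i = (if i < a1 then x0 + t else 1)"
    unfolding \<psi>_def traj_def using po0 po0' gp0 by (simp add: next_state_def not_less)
  have trig1: "trig N \<psi> = {a1..<N}" unfolding trig_def using psi tx by auto
  have cardN: "card {a1..<N} = N - a1" by simp
  have KN: "eps * real (N - a1) = K" unfolding K_def using a1 by (simp add: of_nat_diff mult.commute)
  have cl1: "aval_closed U eps N \<psi> {a1..<N}" unfolding aval_closed_def using psi tx cardN KN by auto
  have av1: "aval U eps N \<psi> = {a1..<N}" using aval_eq_trig[OF rf nr ep epN N1, of \<psi>] cl1 trig1 by simp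
  define X where "X = Uinv U (U (x0 + t) + K)"
  have Xr: "U (x0 + t) + K \<in> {0..1}" using U_range[OF rf xt01(1)] tx K0 by auto
  have po1: "\<And>i. i < a1 \<Longrightarrow> post U R eps N \<psi> i = X"
    unfolding post_def Let_def av1 using psi cardN KN X_def Hmap_def by simp
  define z where "z = eps * (real (N - a1) - 1)"
  have z0: "0 \<le> z" using a1 ep z_def by simp
  have zK: "z < K" using KN z_def ep by (simp add: algebra_simps)
  have Rz: "0 \<le> R z" "R z \<le> z" using R_props(3)[OF rf nr ep epN N1 z0] by auto
  have RzX: "Uinv U (R z) \<le> X"
  proof -
    have "R z \<le> U (x0 + t) + K" using Rz zK U_range[OF rf xt01(1)] by auto
    moreover have "R z \<in> {0..1}" using Rz zK Xr U_range[OF rf xt01(1)] by auto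
    ultimately show ?thesis using Uinv_le_iff[OF rf _ Xr] X_def by simp
  qed
  have po1': "\<And>i. a1 \<le> i \<Longrightarrow> i < N \<Longrightarrow> post U R eps N \<psi> i \<le> X"
  proof -
    fix i assume i: "a1 \<le> i" "i < N"
    have "post U R eps N \<psi> i = Uinv U (R z)"
      unfolding post_def Let_def av1 Jmap_def z_def using psi i U1[OF rf] cardN by simp
    then show "post U R eps N \<psi> i \<le> X" using RzX by simp
  qed
  have gp1: "gap U R eps N \<psi> = 1 - X"
  proof -
    have "Max (post U R eps N \<psi> ` {..<N}) = X"
      apply (rule Max_eq_lt[of N _ _ 0])
      subgoal for i using po1 po1' by (cases "i < a1") auto
      using po1 a1 by auto
    then show ?thesis unfolding gap_def by simp
  qed
  have t0: "traj U R eps N \<phi> 0 = \<phi>" unfolding traj_def by simp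
  have t2: "traj U R eps N \<phi> 2 = next_state U R eps N \<psi>"
    unfolding \<psi>_def traj_def by (simp add: numeral_2_eq_2)
  have t2a: "\<And>i. i < a1 \<Longrightarrow> traj U R eps N \<phi> 2 i = 1"
    using t2 po1 gp1 by (simp add: next_state_def)
  define F where "F = [(a1, t), (N - a1, 1 - X)]"
  have "0 \<in> trig N (traj U R eps N \<phi> 2)" unfolding trig_def using t2a a1 by auto
  then have A2: "0 \<in> aval U eps N (traj U R eps N \<phi> 2)" using trig_sub_aval[OF rf nr ep epN N1] by blast
  have val: "valid_state N \<phi>" unfolding valid_state_def \<phi>_def using pv01 a1
    by (auto intro!: exI[of _ 0])
  have re: "realizes U R eps N \<phi> F"
    unfolding realizes_def
  proof (intro conjI)
    show "valid_state N \<phi>" by (rule val)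
    show "F \<noteq> []" unfolding F_def by simp
    show "\<forall>r<length F. F ! r = (card (aval U eps N (traj U R eps N \<phi> r)), gap U R eps N (traj U R eps N \<phi> r))"
    proof (intro allI impI)
      fix r assume "r < length F"
      then have "r = 0 \<or> r = 1" unfolding F_def by auto
      then show "F ! r = (card (aval U eps N (traj U R eps N \<phi> r)), gap U R eps N (traj U R eps N \<phi> r))"
        using t0 av0 gp0 av1 gp1 cardN \<psi>_def F_def by auto
    qed
    show "\<forall>r\<in>{1..<length F}. aval U eps N (traj U R eps N \<phi> r) \<inter> trig N \<phi> = {}"
      unfolding F_def using av1 trig0 \<psi>_def by auto
    show "aval U eps N (traj U R eps N \<phi> (length F)) \<inter> trig N \<phi> \<noteq> {}"
    proof -
      have "length F = 2" unfolding F_def by simp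
      then show ?thesis using A2 trig0 a1 by auto
    qed
  qed
  have ti: "trigger_invariant U R eps N F"
    unfolding trigger_invariant_def
  proof (intro exI conjI)
    show "realizes U R eps N \<phi> F" by (rule re)
    have "length F = 2" unfolding F_def by simp
    then show "\<forall>i\<in>trig N \<phi>. traj U R eps N \<phi> (length F) i = 1" using t2a trig0 by simp
  qed
  have ad: "admissible U R eps N F" unfolding admissible_def using re by blast
  have aN: "real a * eps \<le> (real N - 1) * eps" using a a1 ep by (simp add: mult_right_mono)
  have "0 \<le> real a * eps" using ep by simp
  then have pr: "1 - real a * eps \<in> {0..1}" unfolding atLeastAtMost_iff using aN epN by linarith
  have MM: "Mmap U R eps F (Uinv U (1 - real a * eps)) = Uinv U (U (y0 + t) + K) + (1 - X)"
  proof -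
    have "U (Uinv U (1 - real a * eps)) + eps * (real a1 - 1) - 1 = c - real a * eps"
      using U_Uinv[OF rf pr] c_def by (simp add: algebra_simps)
    then show ?thesis unfolding Mmap_def F_def Smap_def Jmap_def Hmap_def y0_def using KN by simp
  qed
  show ?thesis
    apply (rule exI[of _ F])
    using ad ti MM unfolding F_def X_def x0_def y0_def c_def K_def by simp
qed

end


context
  fixes U R :: "real \<Rightarrow> real" and eps :: real and N :: nat
  assumes rf: "rise_function U"
    and nr: "neuronal_reset R"
    and ep: "eps > 0"
    and epN: "(real N - 1) * eps < 1"
    and N1: "1 \<le> N"
begin

lemma Uinv_isCont: "0 < y \<Longrightarrow> y < 1 \<Longrightarrow> isCont (Uinv U) y"
  using continuous_on_interior[OF Uinv_cont[OF rf], of y] by auto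

lemma nec_lt:
  assumes inv: "invariant_under_return U R eps N a1" and a1: "2 \<le> a1" "a1 < N" and a: "1 \<le> a" "a < a1"
  shows "condB U R eps N a1 a"
proof (rule ccontr)
  assume nB: "\<not> condB U R eps N a1 a"
  define c where "c = (real a1 - 1) * eps"
  define K where "K = (real N - real a1) * eps"
  have ae0: "0 \<le> real a * eps" using ep by simp
  have ca: "real a * eps \<le> c" using a ep unfolding c_def by (simp add: mult_right_mono)
  have cK: "c + K = (real N - 1) * eps" unfolding c_def K_def by (simp add: algebra_simps)
  have K0: "0 < K" using a1 ep K_def by simp
  have Rc: "0 \<le> R c" "R c \<le> c" using R_props(3)[OF rf nr ep epN N1, of c] ca ae0 by auto
  have Rca: "0 \<le> R (c - real a * eps)" "R (c - real a * eps) \<le> R c"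
    using R_props(3)[OF rf nr ep epN N1, of "c - real a * eps"]
      mono_onD[OF R_props(1)[OF rf nr ep epN N1], of "c - real a * eps" c] ca ae0 by auto
  have Rc01: "R c \<in> {0..1}" "R (c - real a * eps) \<in> {0..1}" using Rc Rca cK K0 epN by auto
  define x0 where "x0 = Uinv U (R c)"
  define y0 where "y0 = Uinv U (R (c - real a * eps))"
  have x001: "x0 \<in> {0..1}" "y0 \<in> {0..1}" using Uinv_range[OF rf] Rc01 x0_def y0_def by auto
  have Ux0: "U x0 = R c" "U y0 = R (c - real a * eps)" using U_Uinv[OF rf] Rc01 x0_def y0_def by auto
  have c1: "c < 1" using cK K0 epN by simp
  have x0l: "x0 < 1" using Uinv_less_iff[OF rf Rc01(1), of 1] Uinv1[OF rf] Rc c1 x0_def by simp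
  have xK: "U x0 + K < 1" "0 < U x0 + K" using Ux0 Rc cK epN K0 by auto
  have yK: "U y0 + K < 1" "0 < U y0 + K" using Ux0 Rca Rc cK epN K0 by auto
  have a1e: "real a1 * eps < 1"
  proof -
    have "real a1 \<le> real N - 1" using a1 by simp
    then have "real a1 * eps \<le> (real N - 1) * eps" using ep by (simp add: mult_right_mono)
    then show ?thesis using epN by simp
  qed
  define D where "D = (\<lambda>t. Uinv U (U (x0 + t) + K) - Uinv U (U (y0 + t) + K))"
  have D0: "1 - Uinv U (1 - real a * eps) < D 0"
  proof -
    have "D 0 = Uinv U (R c + K) - Uinv U (R (c - real a * eps) + K)" unfolding D_def using Ux0 by simp
    then show ?thesis using nB unfolding condB_def c_def K_def by simp
  qed
  have Lid: "((\<lambda>t::real. t) \<longlongrightarrow> 0) (at_right 0)" by (rule tendsto_ident_at)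
  have Lx: "((\<lambda>t. x0 + t) \<longlongrightarrow> x0) (at_right 0)"
    using tendsto_add[OF tendsto_const[of x0] Lid] by simp
  have Ly: "((\<lambda>t. y0 + t) \<longlongrightarrow> y0) (at_right 0)"
    using tendsto_add[OF tendsto_const[of y0] Lid] by simp
  have L1t: "((\<lambda>t::real. 1 - t) \<longlongrightarrow> 1) (at_right 0)"
    using tendsto_diff[OF tendsto_const[of 1] Lid] by simp
  have LUx: "((\<lambda>t. U (x0 + t)) \<longlongrightarrow> U x0) (at_right 0)"
    by (rule isCont_tendsto_compose[OF U_isCont[OF rf x001(1)] Lx])
  have LUy: "((\<lambda>t. U (y0 + t)) \<longlongrightarrow> U y0) (at_right 0)"
    by (rule isCont_tendsto_compose[OF U_isCont[OF rf x001(2)] Ly])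
  have LU1: "((\<lambda>t. U (1 - t)) \<longlongrightarrow> U 1) (at_right 0)"
    by (rule isCont_tendsto_compose[OF U_isCont[OF rf] L1t]) simp
  have LUxK: "((\<lambda>t. U (x0 + t) + K) \<longlongrightarrow> U x0 + K) (at_right 0)"
    using tendsto_add[OF LUx tendsto_const] by simp
  have LUyK: "((\<lambda>t. U (y0 + t) + K) \<longlongrightarrow> U y0 + K) (at_right 0)"
    using tendsto_add[OF LUy tendsto_const] by simp
  have LD: "(D \<longlongrightarrow> D 0) (at_right 0)"
    unfolding D_def
    using tendsto_diff[OF isCont_tendsto_compose[OF Uinv_isCont[OF xK(2,1)] LUxK]
                          isCont_tendsto_compose[OF Uinv_isCont[OF yK(2,1)] LUyK]] by simp
  have ev: "\<forall>\<^sub>F t in at_right 0. t < 1 \<and> x0 + t < 1 \<and> U (x0 + t) + K < 1 \<and> real a1 * eps < U (1 - t)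
      \<and> 1 - Uinv U (1 - real a * eps) < D t"
    apply (intro eventually_conj)
    using order_tendstoD(2)[OF Lid, of 1] apply simp
    using order_tendstoD(2)[OF Lx x0l] apply simp
    using order_tendstoD(2)[OF LUxK xK(1)] apply simp
    using order_tendstoD(1)[OF LU1, of "real a1 * eps"] a1e U1[OF rf] apply simp
    using order_tendstoD(1)[OF LD D0] by simp
  then obtain b where b: "b > 0" "\<And>y. y > 0 \<Longrightarrow> y < b \<Longrightarrow> y < 1 \<and> x0 + y < 1 \<and> U (x0 + y) + K < 1 \<and> real a1 * eps < U (1 - y)
      \<and> 1 - Uinv U (1 - real a * eps) < D y"
    unfolding eventually_at_right_field by auto
  define t where "t = b / 2"
  have t: "0 < t" "t < b" using b t_def by auto
  note tt = b(2)[OF t]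
  obtain F where F: "admissible U R eps N F" "trigger_invariant U R eps N F" "fst (hd F) = a1"
    "Mmap U R eps F (Uinv U (1 - real a * eps)) =
       Uinv U (U (Uinv U (R ((real a1 - 1) * eps - real a * eps)) + t) + (real N - real a1) * eps)
       + (1 - Uinv U (U (Uinv U (R ((real a1 - 1) * eps)) + t) + (real N - real a1) * eps))"
    using construct[OF rf nr ep epN N1 a1 a t(1)] tt unfolding x0_def c_def K_def by auto
  have "Uinv U (1 - real a * eps) \<le> Mmap U R eps F (Uinv U (1 - real a * eps))"
  proof -
    have H: "\<forall>a\<in>{1..<a1}. \<forall>F. admissible U R eps N F \<and> trigger_invariant U R eps N F \<and> fst (hd F) = a1 \<longrightarrow>
        Uinv U (1 - real a * eps) \<le> Mmap U R eps F (Uinv U (1 - real a * eps))"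
      using inv unfolding invariant_under_return_def by simp
    have aa: "a \<in> {1..<a1}" using a by simp
    show ?thesis using bspec[OF H aa] F(1-3) by blast
  qed
  then have "D t \<le> 1 - Uinv U (1 - real a * eps)"
    using F(4) unfolding D_def x0_def y0_def c_def K_def by simp
  then show False using tt by simp
qed

end

theorem mainTheorem6:
  fixes U R :: "real \<Rightarrow> real" and eps :: real and N a1 :: nat
  assumes "rise_function U"
    and "neuronal_reset R"
    and "eps > 0"
    and "(real N - 1) * eps < 1"
    and "2 \<le> a1" and "a1 \<le> N"
  shows "(icpd U \<longrightarrow>
            ((\<forall>a\<in>{1..<a1}. condA U R eps N a1 a) \<longrightarrow> invariant_under_return U R eps N a1) \<and>
            (invariant_under_return U R eps N a1 \<longrightarrow> (\<forall>a\<in>{1..<a1}. condB U R eps N a1 a)))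
       \<and> (dcpd U \<longrightarrow>
            ((\<forall>a\<in>{1..<a1}. condB U R eps N a1 a) \<longrightarrow> invariant_under_return U R eps N a1) \<and>
            (invariant_under_return U R eps N a1 \<longrightarrow> (\<forall>a\<in>{1..<a1}. condA U R eps N a1 a)))"
proof -
  note rf = assms(1) and nr = assms(2) and ep = assms(3) and epN = assms(4)
  have N1: "1 \<le> N" using assms(5,6) by simp
  have nec: "condB U R eps N a1 a" if inv: "invariant_under_return U R eps N a1" and a: "a \<in> {1..<a1}" for a
  proof (cases "a1 = N")
    case True
    then show ?thesis using nec_eq[OF rf nr ep epN N1, of a] inv a by simp
  next
    case False
    then have "a1 < N" using assms(6) by simp
    then show ?thesis using nec_lt[OF rf nr ep epN N1 inv assms(5) _, of a] a by simp
  qed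
  have suf: "invariant_under_return U R eps N a1"
    if h: "\<And>a. a \<in> {1..<a1} \<Longrightarrow> (icpd U \<and> condA U R eps N a1 a) \<or> (dcpd U \<and> condB U R eps N a1 a)"
  unfolding invariant_under_return_def
  proof (intro ballI allI impI)
    fix a F assume a: "a \<in> {1..<a1}" and F: "admissible U R eps N F \<and> trigger_invariant U R eps N F \<and> fst (hd F) = a1"
    show "Uinv U (1 - real a * eps) \<le> Mmap U R eps F (Uinv U (1 - real a * eps))"
      using suff[OF rf nr ep epN N1, of F a1 a] F a h[OF a] by auto
  qed
  show ?thesis
  proof (intro conjI impI)
    assume ic: "icpd U"
    show "(\<forall>a\<in>{1..<a1}. condA U R eps N a1 a) \<Longrightarrow> invariant_under_return U R eps N a1"
      using suf ic by blast
    show "invariant_under_return U R eps N a1 \<Longrightarrow> \<forall>a\<in>{1..<a1}. condB U R eps N a1 a"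
      using nec by blast
  next
    assume dc: "dcpd U"
    show "(\<forall>a\<in>{1..<a1}. condB U R eps N a1 a) \<Longrightarrow> invariant_under_return U R eps N a1"
      using suf dc by blast
    show "invariant_under_return U R eps N a1 \<Longrightarrow> \<forall>a\<in>{1..<a1}. condA U R eps N a1 a"
    proof
      fix a assume inv: "invariant_under_return U R eps N a1" and a: "a \<in> {1..<a1}"
      show "condA U R eps N a1 a"
        using B_imp_A[OF rf nr ep epN N1 dc assms(6), of a] nec[OF inv a] a by simp
    qed
  qed
qed

end
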